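(* Let $\Lambda$ be a row-finite $k$-graph with no sources and $R$ a commutative ring with $1$. The cycline subalgebra $\mathcal{M}$ of ${\rm KP}_R(\Lambda)$ is commutative.
   Context: A $k$-graph is a countable category $\Lambda$ (vertices $\Lambda^0$, paths, maps $r,s$) with a degree functor $d:\Lambda\to\mathbb{N}^k$ satisfying unique factorization: if $d(\lambda)=m+n$ there are unique $\mu,\nu$ with $s(\mu)=r(\nu)$, $d(\mu)=m,d(\nu)=n$, $\lambda=\mu\nu$. $v\Lambda=\{\lambda: r(\lambda)=v\}$, $v\Lambda^n$ those of degree $n$; row-finite with no sources means each $v\Lambda^n$ is finite and nonempty. ${\rm KP}_R(\Lambda)$ is the universal $R$-algebra generated by $p_v$ ($v\in\Lambda^0$), $s_\lambda,s_{\lambda^*}$ ($d(\lambda)\ne0$) with relations (KP1) $p_v$ mutually orthogonal idempotents; (KP2) $s_\lambda s_\mu=s_{\lambda\mu}$, $s_{\mu^*}s_{\lambda^*}=s_{(\lambda\mu)^*}$, $p_{r(\lambda)}s_\lambda=s_\lambda=s_\lambda p_{s(\lambda)}$, $p_{s(\lambda)}s_{\lambda^*}=s_{\lambda^*}=s_{\lambda^*}p_{r(\lambda)}$ when $r(\mu)=s(\lambda)$; (KP3) $s_{\lambda^*}s_\mu=\delta_{\lambda,\mu}p_{s(\lambda)}$ when $d(\lambda)=d(\mu)$; (KP4) $p_v=\sum_{\lambda\in v\Lambda^n}s_\lambda s_{\lambda^*}$ for $n\ne0$. Convention $s_v=s_{v^*}=p_v$. A pair $(\alpha,\beta)\in\Lambda\times\Lambda$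 with $s(\alpha)=s(\beta)$ is a cycline pair if $s_{\alpha\gamma}s_{(\alpha\gamma)^*}=s_{\beta\gamma}s_{(\beta\gamma)^*}$ for all $\gamma\in s(\alpha)\Lambda$. The cycline subalgebra $\mathcal{M}$ is the $R$-subalgebra of ${\rm KP}_R(\Lambda)$ generated by $\{s_\alpha s_{\beta^*}: (\alpha,\beta)\text{ cycline}\}$. *)

theory Defs
  imports Main "HOL-Library.Countable_Set"
begin

text \<open>A k-graph is modelled by: a set Lam of morphisms (paths) of type 'p, the set V of
objects (vertices) identified with the identity morphisms, range and source maps r, s,
composition cmp (only meaningful on composable pairs: cmp lam mu for s lam = r mu,
i.e. lam mu in the paper's notation), and a degree functor d into N^k, where N^k is
rendered as 'k => nat for a finite index type 'k with CARD('k) = k.\<close>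

definition deg_add :: "('k \<Rightarrow> nat) \<Rightarrow> ('k \<Rightarrow> nat) \<Rightarrow> ('k \<Rightarrow> nat)" where
  "deg_add m n = (\<lambda>i. m i + n i)"

definition deg_zero :: "'k \<Rightarrow> nat" where
  "deg_zero = (\<lambda>i. 0)"

definition is_kgraph ::
  "'p set \<Rightarrow> 'p set \<Rightarrow> ('p \<Rightarrow> 'p) \<Rightarrow> ('p \<Rightarrow> 'p) \<Rightarrow> ('p \<Rightarrow> 'p \<Rightarrow> 'p)
   \<Rightarrow> ('p \<Rightarrow> ('k::finite \<Rightarrow> nat)) \<Rightarrow> bool" where
  "is_kgraph Lam V r s cmp d \<longleftrightarrow>
     countable Lam \<and> V \<subseteq> Lam \<and>
     (\<forall>l\<in>Lam. r l \<in> V \<and> s l \<in> V) \<and>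
     (\<forall>v\<in>V. r v = v \<and> s v = v) \<and>
     (\<forall>l\<in>Lam. cmp (r l) l = l \<and> cmp l (s l) = l) \<and>
     (\<forall>l\<in>Lam. \<forall>m\<in>Lam. s l = r m \<longrightarrow>
        cmp l m \<in> Lam \<and> r (cmp l m) = r l \<and> s (cmp l m) = s m) \<and>
     (\<forall>l\<in>Lam. \<forall>m\<in>Lam. \<forall>n\<in>Lam. s l = r m \<longrightarrow> s m = r n \<longrightarrow>
        cmp (cmp l m) n = cmp l (cmp m n)) \<and>
     (\<forall>v\<in>V. d v = deg_zero) \<and>
     (\<forall>l\<in>Lam. \<forall>m\<in>Lam. s l = r m \<longrightarrow> d (cmp l m) = deg_add (d l) (d m)) \<and>
     (\<forall>l\<in>Lam. \<forall>m n. d l = deg_add m n \<longrightarrow>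
        (\<exists>!(mu, nu). mu \<in> Lam \<and> nu \<in> Lam \<and> s mu = r nu \<and> d mu = m \<and> d nu = n
                     \<and> l = cmp mu nu))"

definition row_finite_no_sources ::
  "'p set \<Rightarrow> 'p set \<Rightarrow> ('p \<Rightarrow> 'p) \<Rightarrow> ('p \<Rightarrow> ('k \<Rightarrow> nat)) \<Rightarrow> bool" where
  "row_finite_no_sources Lam V r d \<longleftrightarrow>
     (\<forall>v\<in>V. \<forall>n. finite {l\<in>Lam. r l = v \<and> d l = n} \<and> {l\<in>Lam. r l = v \<and> d l = n} \<noteq> {})"

datatype 'p kpgen = Pgen 'p | Sgen 'p | Sstar 'p

text \<open>Elements of the free algebra over R on the generators: finitely supported functions
from words (lists of generators) to R; we work with all functions, the relevant ones are
finitely supported.\<close>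

type_synonym ('p, 'r) fa = "'p kpgen list \<Rightarrow> 'r"

definition fa_mono :: "'p kpgen list \<Rightarrow> ('p, 'r::comm_ring_1) fa" where
  "fa_mono w = (\<lambda>u. if u = w then 1 else 0)"

definition fa_add :: "('p, 'r::comm_ring_1) fa \<Rightarrow> ('p, 'r) fa \<Rightarrow> ('p, 'r) fa" where
  "fa_add f g = (\<lambda>u. f u + g u)"

definition fa_sub :: "('p, 'r::comm_ring_1) fa \<Rightarrow> ('p, 'r) fa \<Rightarrow> ('p, 'r) fa" where
  "fa_sub f g = (\<lambda>u. f u - g u)"

definition fa_smult :: "'r::comm_ring_1 \<Rightarrow> ('p, 'r) fa \<Rightarrow> ('p, 'r) fa" where
  "fa_smult c f = (\<lambda>u. c * f u)"

definition fa_zero :: "('p, 'r::comm_ring_1) fa" where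
  "fa_zero = (\<lambda>u. 0)"

definition fa_mult :: "('p, 'r::comm_ring_1) fa \<Rightarrow> ('p, 'r) fa \<Rightarrow> ('p, 'r) fa" where
  "fa_mult f g = (\<lambda>w. \<Sum>i\<le>length w. f (take i w) * g (drop i w))"

definition fa_sum :: "'a set \<Rightarrow> ('a \<Rightarrow> ('p, 'r::comm_ring_1) fa) \<Rightarrow> ('p, 'r) fa" where
  "fa_sum A F = (\<lambda>u. \<Sum>a\<in>A. F a u)"

text \<open>Generator words, with the convention s_v = s_{v*} = p_v for degree-zero paths
(which, by unique factorisation, are exactly the vertices).\<close>

definition kp_s :: "('p \<Rightarrow> ('k \<Rightarrow> nat)) \<Rightarrow> 'p \<Rightarrow> ('p, 'r::comm_ring_1) fa" where
  "kp_s d l = fa_mono (if d l = deg_zero then [Pgen l] else [Sgen l])"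

definition kp_sstar :: "('p \<Rightarrow> ('k \<Rightarrow> nat)) \<Rightarrow> 'p \<Rightarrow> ('p, 'r::comm_ring_1) fa" where
  "kp_sstar d l = fa_mono (if d l = deg_zero then [Pgen l] else [Sstar l])"

definition kp_p :: "'p \<Rightarrow> ('p, 'r::comm_ring_1) fa" where
  "kp_p v = fa_mono [Pgen v]"

text \<open>The defining relations (KP1)-(KP4), as elements (left side minus right side)
of the free algebra.\<close>

definition kp_relations ::
  "'p set \<Rightarrow> 'p set \<Rightarrow> ('p \<Rightarrow> 'p) \<Rightarrow> ('p \<Rightarrow> 'p) \<Rightarrow> ('p \<Rightarrow> 'p \<Rightarrow> 'p)
   \<Rightarrow> ('p \<Rightarrow> ('k \<Rightarrow> nat)) \<Rightarrow> ('p, 'r::comm_ring_1) fa set" where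
  "kp_relations Lam V r s cmp d =
     \<comment> \<open>(KP1)\<close>
     {fa_sub (fa_mult (kp_p v) (kp_p v)) (kp_p v) | v. v \<in> V} \<union>
     {fa_mult (kp_p v) (kp_p w) | v w. v \<in> V \<and> w \<in> V \<and> v \<noteq> w} \<union>
     \<comment> \<open>(KP2)\<close>
     {fa_sub (fa_mult (kp_s d l) (kp_s d m)) (kp_s d (cmp l m)) | l m.
        l \<in> Lam \<and> m \<in> Lam \<and> d l \<noteq> deg_zero \<and> d m \<noteq> deg_zero \<and> r m = s l} \<union>
     {fa_sub (fa_mult (kp_sstar d m) (kp_sstar d l)) (kp_sstar d (cmp l m)) | l m.
        l \<in> Lam \<and> m \<in> Lam \<and> d l \<noteq> deg_zero \<and> d m \<noteq> deg_zero \<and> r m = s l} \<union>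
     {fa_sub (fa_mult (kp_p (r l)) (kp_s d l)) (kp_s d l) | l. l \<in> Lam \<and> d l \<noteq> deg_zero} \<union>
     {fa_sub (fa_mult (kp_s d l) (kp_p (s l))) (kp_s d l) | l. l \<in> Lam \<and> d l \<noteq> deg_zero} \<union>
     {fa_sub (fa_mult (kp_p (s l)) (kp_sstar d l)) (kp_sstar d l) | l. l \<in> Lam \<and> d l \<noteq> deg_zero} \<union>
     {fa_sub (fa_mult (kp_sstar d l) (kp_p (r l))) (kp_sstar d l) | l. l \<in> Lam \<and> d l \<noteq> deg_zero} \<union>
     \<comment> \<open>(KP3)\<close>
     {fa_sub (fa_mult (kp_sstar d l) (kp_s d m)) (if l = m then kp_p (s l) else fa_zero) | l m.
        l \<in> Lam \<and> m \<in> Lam \<and> d l \<noteq> deg_zero \<and> d l = d m} \<union>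
     \<comment> \<open>(KP4)\<close>
     {fa_sub (kp_p v) (fa_sum {l\<in>Lam. r l = v \<and> d l = n} (\<lambda>l. fa_mult (kp_s d l) (kp_sstar d l)))
        | v n. v \<in> V \<and> n \<noteq> deg_zero}"

inductive_set fa_ideal :: "('p, 'r::comm_ring_1) fa set \<Rightarrow> ('p, 'r) fa set"
  for G :: "('p, 'r) fa set" where
  gen: "x \<in> G \<Longrightarrow> x \<in> fa_ideal G"
| zero: "fa_zero \<in> fa_ideal G"
| add: "x \<in> fa_ideal G \<Longrightarrow> y \<in> fa_ideal G \<Longrightarrow> fa_add x y \<in> fa_ideal G"
| smult: "x \<in> fa_ideal G \<Longrightarrow> fa_smult c x \<in> fa_ideal G"
| mult: "x \<in> fa_ideal G \<Longrightarrow> fa_mult (fa_mono u) (fa_mult x (fa_mono w)) \<in> fa_ideal G"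

text \<open>KP_R(Lambda) is the quotient of the free algebra by this ideal; two elements of the
free algebra are equal in KP_R(Lambda) iff their difference lies in kp_ideal.\<close>

definition kp_ideal ::
  "'p set \<Rightarrow> 'p set \<Rightarrow> ('p \<Rightarrow> 'p) \<Rightarrow> ('p \<Rightarrow> 'p) \<Rightarrow> ('p \<Rightarrow> 'p \<Rightarrow> 'p)
   \<Rightarrow> ('p \<Rightarrow> ('k \<Rightarrow> nat)) \<Rightarrow> ('p, 'r::comm_ring_1) fa set" where
  "kp_ideal Lam V r s cmp d = fa_ideal (kp_relations Lam V r s cmp d)"

definition kp_eq ::
  "'p set \<Rightarrow> 'p set \<Rightarrow> ('p \<Rightarrow> 'p) \<Rightarrow> ('p \<Rightarrow> 'p) \<Rightarrow> ('p \<Rightarrow> 'p \<Rightarrow> 'p)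
   \<Rightarrow> ('p \<Rightarrow> ('k \<Rightarrow> nat)) \<Rightarrow> ('p, 'r::comm_ring_1) fa \<Rightarrow> ('p, 'r) fa \<Rightarrow> bool" where
  "kp_eq Lam V r s cmp d x y \<longleftrightarrow> fa_sub x y \<in> kp_ideal Lam V r s cmp d"

definition cycline_pair ::
  "'p set \<Rightarrow> 'p set \<Rightarrow> ('p \<Rightarrow> 'p) \<Rightarrow> ('p \<Rightarrow> 'p) \<Rightarrow> ('p \<Rightarrow> 'p \<Rightarrow> 'p)
   \<Rightarrow> ('p \<Rightarrow> ('k \<Rightarrow> nat)) \<Rightarrow> 'r::comm_ring_1 itself \<Rightarrow> 'p \<Rightarrow> 'p \<Rightarrow> bool" where
  "cycline_pair Lam V r s cmp d (_::'r itself) a b \<longleftrightarrow>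
     a \<in> Lam \<and> b \<in> Lam \<and> s a = s b \<and>
     (\<forall>g\<in>Lam. r g = s a \<longrightarrow>
        kp_eq Lam V r s cmp d
          (fa_mult (kp_s d (cmp a g)) (kp_sstar d (cmp a g)) :: ('p, 'r) fa)
          (fa_mult (kp_s d (cmp b g)) (kp_sstar d (cmp b g))))"

text \<open>Representatives (in the free algebra) of the elements of the cycline subalgebra:
the R-subalgebra generated by the s_alpha s_{beta*} with (alpha, beta) cycline.\<close>

inductive_set cycline_sub ::
  "'p set \<Rightarrow> 'p set \<Rightarrow> ('p \<Rightarrow> 'p) \<Rightarrow> ('p \<Rightarrow> 'p) \<Rightarrow> ('p \<Rightarrow> 'p \<Rightarrow> 'p)
   \<Rightarrow> ('p \<Rightarrow> ('k \<Rightarrow> nat)) \<Rightarrow> ('p, 'r::comm_ring_1) fa set"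
  for Lam V r s cmp d where
  gen: "cycline_pair Lam V r s cmp d TYPE('r) a b \<Longrightarrow>
        fa_mult (kp_s d a) (kp_sstar d b) \<in> cycline_sub Lam V r s cmp d"
| zero: "fa_zero \<in> cycline_sub Lam V r s cmp d"
| add: "x \<in> cycline_sub Lam V r s cmp d \<Longrightarrow> y \<in> cycline_sub Lam V r s cmp d \<Longrightarrow>
        fa_add x y \<in> cycline_sub Lam V r s cmp d"
| smult: "x \<in> cycline_sub Lam V r s cmp d \<Longrightarrow> fa_smult c x \<in> cycline_sub Lam V r s cmp d"
| mult: "x \<in> cycline_sub Lam V r s cmp d \<Longrightarrow> y \<in> cycline_sub Lam V r s cmp d \<Longrightarrow>
        fa_mult x y \<in> cycline_sub Lam V r s cmp d"

end

theory Submission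
  imports Defs "HOL-Library.Poly_Mapping"
begin

instantiation list :: (type) monoid_add
begin
definition zero_list_def: "0 = []"
definition plus_list_def: "(xs::'a list) + ys = xs @ ys"
instance by standard (auto simp: zero_list_def plus_list_def)
end

lemma sum_any_prefix:
  fixes g :: "'a list \<Rightarrow> 'b::comm_monoid_add"
  shows "(\<Sum>q. (g q when w = l + q)) = (g (drop (length l) w) when take (length l) w = l)"
proof -
  have "(\<lambda>q. (g q when w = l + q)) = (\<lambda>q. if q = drop (length l) w then (g q when take (length l) w = l) else 0)"
    by (auto simp: fun_eq_iff plus_list_def when_def) (metis append_take_drop_id)
  then show ?thesis by (simp only:) (rule Sum_any.delta)
qed

lemma lookup_mult_list:
  fixes X Y :: "'a list \<Rightarrow>\<^sub>0 'b::comm_ring_1"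
  shows "Poly_Mapping.lookup (X * Y) w = (\<Sum>i\<le>length w. Poly_Mapping.lookup X (take i w) * Poly_Mapping.lookup Y (drop i w))"
proof -
  have "Poly_Mapping.lookup (X * Y) w = (\<Sum>l. Poly_Mapping.lookup X l * (Poly_Mapping.lookup Y (drop (length l) w) when take (length l) w = l))"
    by (simp only: lookup_mult sum_any_prefix)
  also have "\<dots> = (\<Sum>l. if l \<in> (\<lambda>i. take i w) ` {..length w} then Poly_Mapping.lookup X l * Poly_Mapping.lookup Y (drop (length l) w) else 0)"
  proof (rule Sum_any.cong)
    fix l :: "'a list"
    have "take (length l) w = l \<longleftrightarrow> l \<in> (\<lambda>i. take i w) ` {..length w}"
    proof
      assume "take (length l) w = l"
      then show "l \<in> (\<lambda>i. take i w) ` {..length w}"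
      proof -
        assume A: "take (length l) w = l"
        have "min (length l) (length w) = length l" using arg_cong[OF A, of length] by simp
        then have "length l \<le> length w" by (simp add: min_def split: if_splits)
        then show ?thesis using A by (intro image_eqI[of _ _ "length l"]) auto
      qed
    next
      assume "l \<in> (\<lambda>i. take i w) ` {..length w}"
      then show "take (length l) w = l" by auto
    qed
    then show "(Poly_Mapping.lookup X l * (Poly_Mapping.lookup Y (drop (length l) w) when take (length l) w = l)) =
      (if l \<in> (\<lambda>i. take i w) ` {..length w} then Poly_Mapping.lookup X l * Poly_Mapping.lookup Y (drop (length l) w) else 0)"
      by (simp add: when_def)
  qed
  also have "\<dots> = (\<Sum>l\<in>(\<lambda>i. take i w) ` {..length w}. Poly_Mapping.lookup X l * Poly_Mapping.lookup Y (drop (length l) w))"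
    by (rule Sum_any.conditionalize[symmetric]) simp
  also have "\<dots> = (\<Sum>i\<le>length w. Poly_Mapping.lookup X (take i w) * Poly_Mapping.lookup Y (drop i w))"
  proof -
    have "inj_on (\<lambda>i. take i w) {..length w}"
    proof (rule inj_onI)
      fix i j assume "i \<in> {..length w}" "j \<in> {..length w}" "take i w = take j w"
      then have "length (take i w) = length (take j w)" by simp
      then show "i = j" using \<open>i \<in> {..length w}\<close> \<open>j \<in> {..length w}\<close> by (simp add: min_def split: if_splits)
    qed
    then show ?thesis by (simp add: sum.reindex)
  qed
  finally show ?thesis .
qed



definition dsub :: "('k \<Rightarrow> nat) \<Rightarrow> ('k \<Rightarrow> nat) \<Rightarrow> ('k \<Rightarrow> nat)" where
  "dsub m n = (\<lambda>i. m i - n i)"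

lemma deg_add_dsub: "n \<le> m \<Longrightarrow> deg_add n (dsub m n) = m"
  by (auto simp: deg_add_def dsub_def le_fun_def fun_eq_iff)

lemma deg_add_zero[simp]: "deg_add deg_zero n = n" "deg_add n deg_zero = n"
  by (auto simp: deg_add_def deg_zero_def)

locale idl =
  fixes J :: "'b::ring_1 set"
  assumes J0: "0 \<in> J"
    and Jadd: "x \<in> J \<Longrightarrow> y \<in> J \<Longrightarrow> x + y \<in> J"
    and Jl: "x \<in> J \<Longrightarrow> a * x \<in> J"
    and Jr: "x \<in> J \<Longrightarrow> x * a \<in> J"
begin

definition eqJ :: "'b \<Rightarrow> 'b \<Rightarrow> bool" (infix "\<approx>" 50) where
  "x \<approx> y \<longleftrightarrow> x - y \<in> J"

lemma Jneg: "x \<in> J \<Longrightarrow> - x \<in> J"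
  using Jl[of x "-1"] by simp

lemma Jdiff: "x \<in> J \<Longrightarrow> y \<in> J \<Longrightarrow> x - y \<in> J"
  using Jadd[OF _ Jneg[of y], of x] by simp

lemma eq_refl[simp, intro]: "x \<approx> x"
  by (simp add: eqJ_def J0)

lemma eq_sym: "x \<approx> y \<Longrightarrow> y \<approx> x"
  unfolding eqJ_def using Jneg[of "x - y"] by (simp add: minus_diff_eq)

lemma eq_trans[trans]: "x \<approx> y \<Longrightarrow> y \<approx> z \<Longrightarrow> x \<approx> z"
proof -
  assume a: "x \<approx> y" and b: "y \<approx> z"
  have "x - z = (x - y) + (y - z)" by (simp add: algebra_simps)
  then show ?thesis using Jadd[OF a[unfolded eqJ_def] b[unfolded eqJ_def]] unfolding eqJ_def by metis
qed

lemma eq_add: "x \<approx> x' \<Longrightarrow> y \<approx> y' \<Longrightarrow> x + y \<approx> x' + y'"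
proof -
  assume a: "x \<approx> x'" and b: "y \<approx> y'"
  have "(x + y) - (x' + y') = (x - x') + (y - y')" by (simp add: algebra_simps)
  then show ?thesis using Jadd[OF a[unfolded eqJ_def] b[unfolded eqJ_def]] unfolding eqJ_def by metis
qed

lemma eq_diff: "x \<approx> x' \<Longrightarrow> y \<approx> y' \<Longrightarrow> x - y \<approx> x' - y'"
proof -
  assume a: "x \<approx> x'" and b: "y \<approx> y'"
  have "(x - y) - (x' - y') = (x - x') - (y - y')" by (simp add: algebra_simps)
  then show ?thesis using Jdiff[OF a[unfolded eqJ_def] b[unfolded eqJ_def]] unfolding eqJ_def by metis
qed

lemma eq_ml: "x \<approx> y \<Longrightarrow> a * x \<approx> a * y"
  unfolding eqJ_def using Jl[of "x - y" a] by (simp add: right_diff_distrib)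

lemma eq_mr: "x \<approx> y \<Longrightarrow> x * a \<approx> y * a"
  unfolding eqJ_def using Jr[of "x - y" a] by (simp add: left_diff_distrib)

lemma eq_mult: "x \<approx> x' \<Longrightarrow> y \<approx> y' \<Longrightarrow> x * y \<approx> x' * y'"
proof -
  assume "x \<approx> x'" "y \<approx> y'"
  then show ?thesis using eq_trans[OF eq_mr[of x x' y] eq_ml[of y y' x']] by blast
qed

lemma eq_sum: "(\<And>i. i \<in> A \<Longrightarrow> f i \<approx> g i) \<Longrightarrow> sum f A \<approx> sum g A"
proof (induction A rule: infinite_finite_induct)
  case (insert x F)
  have a: "f x \<approx> g x" by (rule insert.prems) simp
  have b: "sum f F \<approx> sum g F" by (rule insert.IH) (rule insert.prems, simp)
  have "f x + sum f F \<approx> g x + sum g F" by (rule eq_add[OF a b])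
  then show ?case using insert.hyps by simp
qed simp_all

lemma eq_if: "(P \<Longrightarrow> x \<approx> y) \<Longrightarrow> (if P then x else 0) \<approx> (if P then y else 0)"
  by auto

end


lemma deg_add_comm: "deg_add m n = deg_add n m"
  by (auto simp: deg_add_def)

lemma mif_r: "a * (if P then x else 0) = (if P then a * x else (0::'a::ring_1))" by simp
lemma mif_l: "(if P then x else 0) * a = (if P then x * a else (0::'a::ring_1))" by simp

lemma sum4_swap:
  "(\<Sum>a\<in>A. \<Sum>b\<in>B. \<Sum>c\<in>C. \<Sum>e\<in>E. F a b c e) = (\<Sum>c\<in>C. \<Sum>e\<in>E. \<Sum>a\<in>A. \<Sum>b\<in>B. F a b c e)"
proof -
  have "(\<Sum>a\<in>A. \<Sum>b\<in>B. \<Sum>c\<in>C. \<Sum>e\<in>E. F a b c e) = (\<Sum>a\<in>A. \<Sum>c\<in>C. \<Sum>b\<in>B. \<Sum>e\<in>E. F a b c e)"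
    by (rule sum.cong[OF refl], rule sum.swap)
  also have "\<dots> = (\<Sum>a\<in>A. \<Sum>c\<in>C. \<Sum>e\<in>E. \<Sum>b\<in>B. F a b c e)"
    by (rule sum.cong[OF refl], rule sum.cong[OF refl], rule sum.swap)
  also have "\<dots> = (\<Sum>c\<in>C. \<Sum>a\<in>A. \<Sum>e\<in>E. \<Sum>b\<in>B. F a b c e)"
    by (rule sum.swap)
  also have "\<dots> = (\<Sum>c\<in>C. \<Sum>e\<in>E. \<Sum>a\<in>A. \<Sum>b\<in>B. F a b c e)"
    by (rule sum.cong[OF refl], rule sum.swap)
  finally show ?thesis .
qed

locale kp = idl J for J :: "'b::ring_1 set" +
  fixes Lam V :: "'p set" and r s :: "'p \<Rightarrow> 'p" and cmp :: "'p \<Rightarrow> 'p \<Rightarrow> 'p"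
    and d :: "'p \<Rightarrow> ('k::finite \<Rightarrow> nat)"
    and P S T :: "'p \<Rightarrow> 'b"
  assumes kg: "is_kgraph Lam V r s cmp d"
    and rf: "row_finite_no_sources Lam V r d"
    and S0: "d l = deg_zero \<Longrightarrow> S l = P l"
    and T0: "d l = deg_zero \<Longrightarrow> T l = P l"
    and R1a: "v \<in> V \<Longrightarrow> P v * P v \<approx> P v"
    and R1b: "v \<in> V \<Longrightarrow> w \<in> V \<Longrightarrow> v \<noteq> w \<Longrightarrow> P v * P w \<approx> 0"
    and R2a: "l \<in> Lam \<Longrightarrow> m \<in> Lam \<Longrightarrow> d l \<noteq> deg_zero \<Longrightarrow> d m \<noteq> deg_zero \<Longrightarrow> r m = s l
              \<Longrightarrow> S l * S m \<approx> S (cmp l m)"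
    and R2b: "l \<in> Lam \<Longrightarrow> m \<in> Lam \<Longrightarrow> d l \<noteq> deg_zero \<Longrightarrow> d m \<noteq> deg_zero \<Longrightarrow> r m = s l
              \<Longrightarrow> T m * T l \<approx> T (cmp l m)"
    and R2c: "l \<in> Lam \<Longrightarrow> d l \<noteq> deg_zero \<Longrightarrow> P (r l) * S l \<approx> S l"
    and R2d: "l \<in> Lam \<Longrightarrow> d l \<noteq> deg_zero \<Longrightarrow> S l * P (s l) \<approx> S l"
    and R2e: "l \<in> Lam \<Longrightarrow> d l \<noteq> deg_zero \<Longrightarrow> P (s l) * T l \<approx> T l"
    and R2f: "l \<in> Lam \<Longrightarrow> d l \<noteq> deg_zero \<Longrightarrow> T l * P (r l) \<approx> T l"
    and R3: "l \<in> Lam \<Longrightarrow> m \<in> Lam \<Longrightarrow> d l \<noteq> deg_zero \<Longrightarrow> d l = d m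
              \<Longrightarrow> T l * S m \<approx> (if l = m then P (s l) else 0)"
    and R4: "v \<in> V \<Longrightarrow> n \<noteq> deg_zero \<Longrightarrow> P v \<approx> (\<Sum>l\<in>{l\<in>Lam. r l = v \<and> d l = n}. S l * T l)"
begin

lemmas K = kg[unfolded is_kgraph_def]
lemma kgs1: "V \<subseteq> Lam"
  by (rule K[THEN conjunct2, THEN conjunct1])
lemma kgs2: "\<forall>l\<in>Lam. r l \<in> V \<and> s l \<in> V"
  by (rule K[THEN conjunct2, THEN conjunct2, THEN conjunct1])
lemma kgs3: "\<forall>v\<in>V. r v = v \<and> s v = v"
  by (rule K[THEN conjunct2, THEN conjunct2, THEN conjunct2, THEN conjunct1])
lemma kgs4: "\<forall>l\<in>Lam. cmp (r l) l = l \<and> cmp l (s l) = l"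
  by (rule K[THEN conjunct2, THEN conjunct2, THEN conjunct2, THEN conjunct2, THEN conjunct1])
lemma kgs5: "\<forall>l\<in>Lam. \<forall>m\<in>Lam. s l = r m \<longrightarrow> cmp l m \<in> Lam \<and> r (cmp l m) = r l \<and> s (cmp l m) = s m"
  by (rule K[THEN conjunct2, THEN conjunct2, THEN conjunct2, THEN conjunct2, THEN conjunct2, THEN conjunct1])
lemma kgs6: "\<forall>l\<in>Lam. \<forall>m\<in>Lam. \<forall>n\<in>Lam. s l = r m \<longrightarrow> s m = r n \<longrightarrow> cmp (cmp l m) n = cmp l (cmp m n)"
  by (rule K[THEN conjunct2, THEN conjunct2, THEN conjunct2, THEN conjunct2, THEN conjunct2, THEN conjunct2, THEN conjunct1])
lemma kgs7: "\<forall>v\<in>V. d v = deg_zero"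
  by (rule K[THEN conjunct2, THEN conjunct2, THEN conjunct2, THEN conjunct2, THEN conjunct2, THEN conjunct2, THEN conjunct2, THEN conjunct1])
lemma kgs8: "\<forall>l\<in>Lam. \<forall>m\<in>Lam. s l = r m \<longrightarrow> d (cmp l m) = deg_add (d l) (d m)"
  by (rule K[THEN conjunct2, THEN conjunct2, THEN conjunct2, THEN conjunct2, THEN conjunct2, THEN conjunct2, THEN conjunct2, THEN conjunct2, THEN conjunct1])
lemma kgs9: "\<forall>l\<in>Lam. \<forall>m n. d l = deg_add m n \<longrightarrow>
        (\<exists>!(mu, nu). mu \<in> Lam \<and> nu \<in> Lam \<and> s mu = r nu \<and> d mu = m \<and> d nu = n \<and> l = cmp mu nu)"
  by (rule K[THEN conjunct2, THEN conjunct2, THEN conjunct2, THEN conjunct2, THEN conjunct2, THEN conjunct2, THEN conjunct2, THEN conjunct2, THEN conjunct2])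
lemmas kgs = kgs1 kgs2 kgs3 kgs4 kgs5 kgs6 kgs7 kgs8 kgs9

lemma VLam: "v \<in> V \<Longrightarrow> v \<in> Lam" using kgs(1) by blast
lemma rV: "l \<in> Lam \<Longrightarrow> r l \<in> V" using kgs(2) by blast
lemma sV: "l \<in> Lam \<Longrightarrow> s l \<in> V" using kgs(2) by blast
lemma rv: "v \<in> V \<Longrightarrow> r v = v" using kgs(3) by blast
lemma sv: "v \<in> V \<Longrightarrow> s v = v" using kgs(3) by blast
lemma dv: "v \<in> V \<Longrightarrow> d v = deg_zero" using kgs(7) by blast
lemma cr: "l \<in> Lam \<Longrightarrow> cmp (r l) l = l" using kgs(4) by blast
lemma cs: "l \<in> Lam \<Longrightarrow> cmp l (s l) = l" using kgs(4) by blast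
lemma cL: "l \<in> Lam \<Longrightarrow> m \<in> Lam \<Longrightarrow> s l = r m \<Longrightarrow> cmp l m \<in> Lam"
  using kgs(5) by blast
lemma rc: "l \<in> Lam \<Longrightarrow> m \<in> Lam \<Longrightarrow> s l = r m \<Longrightarrow> r (cmp l m) = r l"
  using kgs(5) by blast
lemma sc: "l \<in> Lam \<Longrightarrow> m \<in> Lam \<Longrightarrow> s l = r m \<Longrightarrow> s (cmp l m) = s m"
  using kgs(5) by blast
lemma dc: "l \<in> Lam \<Longrightarrow> m \<in> Lam \<Longrightarrow> s l = r m \<Longrightarrow> d (cmp l m) = deg_add (d l) (d m)"
  using kgs(8) by blast
lemma ca: "l \<in> Lam \<Longrightarrow> m \<in> Lam \<Longrightarrow> n \<in> Lam \<Longrightarrow> s l = r m \<Longrightarrow> s m = r n \<Longrightarrow>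
    cmp (cmp l m) n = cmp l (cmp m n)"
  using kgs(6) by blast
lemma uf: "l \<in> Lam \<Longrightarrow> d l = deg_add m n \<Longrightarrow>
   \<exists>!(mu, nu). mu \<in> Lam \<and> nu \<in> Lam \<and> s mu = r nu \<and> d mu = m \<and> d nu = n \<and> l = cmp mu nu"
  using kgs(9) by blast

lemma uniq_pair:
  assumes "\<exists>!(mu, nu). Q mu nu" "Q a b" "Q c e"
  shows "a = c \<and> b = e"
proof -
  obtain z where z: "(case z of (mu, nu) \<Rightarrow> Q mu nu)" "\<And>y. (case y of (mu, nu) \<Rightarrow> Q mu nu) \<Longrightarrow> y = z"
    using assms(1) by (elim ex1E) blast
  have "(a, b) = z" using z(2)[of "(a,b)"] assms(2) by simp
  moreover have "(c, e) = z" using z(2)[of "(c,e)"] assms(3) by simp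
  ultimately have "(a, b) = (c, e)" by simp
  then show ?thesis by simp
qed

lemma deg0V: assumes "l \<in> Lam" "d l = deg_zero" shows "l \<in> V"
proof -
  have u: "\<exists>!(mu, nu). mu \<in> Lam \<and> nu \<in> Lam \<and> s mu = r nu \<and> d mu = deg_zero \<and> d nu = deg_zero \<and> l = cmp mu nu"
    using uf[OF assms(1), of deg_zero deg_zero] assms(2) by simp
  have rl: "r l \<in> V" "s l \<in> V" using rV sV assms(1) by auto
  have "r l = l \<and> l = s l"
    by (rule uniq_pair[OF u]) (use assms rl VLam rv sv dv cr cs in auto)
  then show ?thesis using rl by simp
qed

lemma cancel:
  assumes "a \<in> Lam" "g \<in> Lam" "h \<in> Lam" "r g = s a" "r h = s a" "d g = d h" "cmp a g = cmp a h"
  shows "g = h"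
proof -
  have l: "cmp a g \<in> Lam" "d (cmp a g) = deg_add (d a) (d g)" using assms cL dc by auto
  have u: "\<exists>!(mu, nu). mu \<in> Lam \<and> nu \<in> Lam \<and> s mu = r nu \<and> d mu = d a \<and> d nu = d g \<and> cmp a g = cmp mu nu"
    using uf[OF l] by simp
  have "a = a \<and> g = h"
    by (rule uniq_pair[OF u]) (use assms in auto)
  then show ?thesis by simp
qed

definition Lp :: "'p \<Rightarrow> ('k \<Rightarrow> nat) \<Rightarrow> 'p set" where
  "Lp v n = {l\<in>Lam. r l = v \<and> d l = n}"

lemma Lp_fin: "v \<in> V \<Longrightarrow> finite (Lp v n)"
  using rf unfolding row_finite_no_sources_def Lp_def by blast

lemma Lp0: assumes "v \<in> V" shows "Lp v deg_zero = {v}"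
proof
  show "Lp v deg_zero \<subseteq> {v}" using deg0V rv unfolding Lp_def by force
  show "{v} \<subseteq> Lp v deg_zero" using assms VLam rv dv unfolding Lp_def by auto
qed

lemma LpD: "g \<in> Lp v n \<Longrightarrow> g \<in> Lam \<and> r g = v \<and> d g = n" unfolding Lp_def by auto

lemma cmpLp:
  assumes "a \<in> Lam" "g \<in> Lp (s a) n"
  shows "cmp a g \<in> Lam" "d (cmp a g) = deg_add (d a) n" "r (cmp a g) = r a" "s (cmp a g) = s g"
  using assms LpD[OF assms(2)] cL dc rc sc by auto

lemma FPP: "v \<in> V \<Longrightarrow> w \<in> V \<Longrightarrow> P v * P w \<approx> (if v = w then P v else 0)"
  using R1a R1b by auto

lemma FSl: assumes "l \<in> Lam" shows "P (r l) * S l \<approx> S l"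
proof (cases "d l = deg_zero")
  case True
  then have "l \<in> V" using deg0V assms by auto
  then show ?thesis using True S0 R1a rv by simp
qed (use assms R2c in auto)

lemma FSr: assumes "l \<in> Lam" shows "S l * P (s l) \<approx> S l"
proof (cases "d l = deg_zero")
  case True
  then have "l \<in> V" using deg0V assms by auto
  then show ?thesis using True S0 R1a sv by simp
qed (use assms R2d in auto)

lemma FTl: assumes "l \<in> Lam" shows "P (s l) * T l \<approx> T l"
proof (cases "d l = deg_zero")
  case True
  then have "l \<in> V" using deg0V assms by auto
  then show ?thesis using True T0 R1a sv by simp
qed (use assms R2e in auto)

lemma FTr: assumes "l \<in> Lam" shows "T l * P (r l) \<approx> T l"
proof (cases "d l = deg_zero")
  case True
  then have "l \<in> V" using deg0V assms by auto
  then show ?thesis using True T0 R1a rv by simp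
qed (use assms R2f in auto)

lemma FSS: assumes "l \<in> Lam" "m \<in> Lam" "s l = r m" shows "S l * S m \<approx> S (cmp l m)"
proof (cases "d l = deg_zero")
  case True
  then have "l \<in> V" using deg0V assms by auto
  then have "l = r m" "cmp l m = m" using assms sv cr by auto
  then show ?thesis using True S0 FSl[OF assms(2)] by simp
next
  case False
  show ?thesis
  proof (cases "d m = deg_zero")
    case True
    then have "m \<in> V" using deg0V assms by auto
    then have "m = s l" "cmp l m = l" using assms rv cs by auto
    then show ?thesis using True S0 FSr[OF assms(1)] by simp
  qed (use assms False R2a in auto)
qed

lemma FTT: assumes "l \<in> Lam" "m \<in> Lam" "s l = r m" shows "T m * T l \<approx> T (cmp l m)"
proof (cases "d l = deg_zero")
  case True
  then have "l \<in> V" using deg0V assms by auto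
  then have "l = r m" "cmp l m = m" using assms sv cr by auto
  then show ?thesis using True T0 FTr[OF assms(2)] by simp
next
  case False
  show ?thesis
  proof (cases "d m = deg_zero")
    case True
    then have "m \<in> V" using deg0V assms by auto
    then have "m = s l" "cmp l m = l" using assms rv cs by auto
    then show ?thesis using True T0 FTl[OF assms(1)] by simp
  qed (use assms False R2b in auto)
qed

lemma FTS: assumes "l \<in> Lam" "m \<in> Lam" "d l = d m"
  shows "T l * S m \<approx> (if l = m then P (s l) else 0)"
proof (cases "d l = deg_zero")
  case True
  then have lm: "l \<in> V" "m \<in> V" using deg0V assms by auto
  have "T l = P l" "S m = P m" using True assms(3) T0 S0 by auto
  moreover have "s l = l" using lm sv by auto
  ultimately show ?thesis using FPP[OF lm] by (cases "l = m") auto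
qed (use assms R3 in auto)

lemma FK: assumes "v \<in> V" shows "P v \<approx> (\<Sum>l\<in>Lp v n. S l * T l)"
proof (cases "n = deg_zero")
  case True
  have "(\<Sum>l\<in>Lp v n. S l * T l) = P v * P v"
    using True Lp0[OF assms] dv[OF assms] S0 T0 by simp
  then show ?thesis using R1a[OF assms] eq_sym by simp
qed (use assms R4 in \<open>auto simp: Lp_def\<close>)

definition PP :: "'p \<Rightarrow> 'b" where "PP l = S l * T l"

lemma D2: assumes "l \<in> Lam" shows "PP l * S l \<approx> S l"
proof -
  have "PP l * S l = S l * (T l * S l)" by (simp add: PP_def mult.assoc)
  also have "\<dots> \<approx> S l * P (s l)" using FTS[OF assms assms] by (simp add: eq_ml)
  also have "\<dots> \<approx> S l" using FSr[OF assms] .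
  finally show ?thesis .
qed

lemma D3: assumes "l \<in> Lam" shows "T l * PP l \<approx> T l"
proof -
  have "T l * PP l = (T l * S l) * T l" by (simp add: PP_def mult.assoc)
  also have "\<dots> \<approx> P (s l) * T l" using FTS[OF assms assms] by (simp add: eq_mr)
  also have "\<dots> \<approx> T l" using FTl[OF assms] .
  finally show ?thesis .
qed

lemma D4: assumes "l \<in> Lam" shows "PP l * PP l \<approx> PP l"
proof -
  have "PP l * PP l = (PP l * S l) * T l" by (simp add: PP_def mult.assoc)
  also have "\<dots> \<approx> S l * T l" using D2[OF assms] by (rule eq_mr)
  finally show ?thesis by (simp add: PP_def)
qed

lemma PPorth: assumes "x \<in> Lam" "y \<in> Lam" "d x = d y"
  shows "PP x * PP y \<approx> (if x = y then PP x else 0)"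
proof (cases "x = y")
  case True then show ?thesis using D4 assms by simp
next
  case False
  have "PP x * PP y = S x * (T x * S y) * T y" by (simp add: PP_def mult.assoc)
  also have "\<dots> \<approx> S x * 0 * T y" using FTS[OF assms] False by (intro eq_mr eq_ml) simp
  finally show ?thesis using False by simp
qed

lemma E1: assumes "a \<in> Lam" "b \<in> Lam" "s a = s b"
  shows "S a * T b \<approx> (\<Sum>g\<in>Lp (s a) n. S (cmp a g) * T (cmp b g))"
proof -
  have "S a * T b \<approx> S a * P (s a) * T b" by (rule eq_sym[OF eq_mr[OF FSr[OF assms(1)]]])
  also have "\<dots> \<approx> S a * (\<Sum>g\<in>Lp (s a) n. S g * T g) * T b"
    using FK[OF sV[OF assms(1)]] by (intro eq_mr eq_ml)
  also have "\<dots> = (\<Sum>g\<in>Lp (s a) n. (S a * S g) * (T g * T b))"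
    by (simp add: sum_distrib_left sum_distrib_right mult.assoc)
  also have "\<dots> \<approx> (\<Sum>g\<in>Lp (s a) n. S (cmp a g) * T (cmp b g))"
  proof (rule eq_sum)
    fix g assume g: "g \<in> Lp (s a) n"
    then have "g \<in> Lam" "r g = s a" using LpD by auto
    then show "(S a * S g) * (T g * T b) \<approx> S (cmp a g) * T (cmp b g)"
      using assms by (intro eq_mult FSS FTT) auto
  qed
  finally show ?thesis .
qed

lemma PPexp: "a \<in> Lam \<Longrightarrow> PP a \<approx> (\<Sum>g\<in>Lp (s a) n. PP (cmp a g))"
  unfolding PP_def using E1 by blast



lemma PPorth_if: assumes "x \<in> Lam" "y \<in> Lam" "d x = d y"
  shows "c * PP x * PP y \<approx> (if x = y then c * PP x else 0)"
proof -
  have "c * PP x * PP y = c * (PP x * PP y)" by (simp add: mult.assoc)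
  also have "\<dots> \<approx> c * (if x = y then PP x else 0)" using PPorth[OF assms] by (rule eq_ml)
  also have "\<dots> = (if x = y then c * PP x else 0)" by simp
  finally show ?thesis .
qed

definition cyc :: "'p \<Rightarrow> 'p \<Rightarrow> bool" where
  "cyc a b \<longleftrightarrow> a \<in> Lam \<and> b \<in> Lam \<and> s a = s b \<and>
     (\<forall>g\<in>Lam. r g = s a \<longrightarrow> PP (cmp a g) \<approx> PP (cmp b g))"

lemma cycD: assumes "cyc a b"
  shows "a \<in> Lam" "b \<in> Lam" "s a = s b" "\<And>g. g \<in> Lam \<Longrightarrow> r g = s a \<Longrightarrow> PP (cmp a g) \<approx> PP (cmp b g)"
  using assms unfolding cyc_def by auto

lemma cyc0: assumes "cyc a b" shows "PP a \<approx> PP b"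
proof -
  have "s a \<in> Lam" "r (s a) = s a" using cycD[OF assms] sV VLam rv by auto
  then have "PP (cmp a (s a)) \<approx> PP (cmp b (s a))" using cycD(4)[OF assms] by blast
  then show ?thesis using cycD[OF assms] cs by metis
qed

lemma RS: assumes "cyc a b" shows "S a * T b * PP a \<approx> S a * T b"
proof -
  have ab: "a \<in> Lam" "b \<in> Lam" using cycD[OF assms] by auto
  have "S a * T b * PP a = S a * (T b * PP a)" by (simp add: mult.assoc)
  also have "\<dots> \<approx> S a * (T b * PP b)" using cyc0[OF assms] by (intro eq_ml)
  also have "\<dots> \<approx> S a * T b" using D3[OF ab(2)] by (rule eq_ml)
  finally show ?thesis .
qed

lemma LA:
  assumes c: "cyc a b" and a': "a' \<in> Lam"
  shows "S a * T b * PP a' \<approx>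
    (\<Sum>g\<in>Lp (s a) (d a'). \<Sum>h\<in>Lp (s a') (d a). if cmp a g = cmp a' h then S (cmp a g) * T (cmp b g) else 0)"
proof -
  note ab = cycD[OF c]
  have "S a * T b * PP a' \<approx> (\<Sum>g\<in>Lp (s a) (d a'). S (cmp a g) * T (cmp b g)) * (\<Sum>h\<in>Lp (s a') (d a). PP (cmp a' h))"
    using E1[OF ab(1,2,3)] PPexp[OF a'] by (rule eq_mult)
  also have "\<dots> = (\<Sum>g\<in>Lp (s a) (d a'). \<Sum>h\<in>Lp (s a') (d a). S (cmp a g) * T (cmp b g) * PP (cmp a' h))"
    by (rule sum_product)
  also have "\<dots> \<approx> (\<Sum>g\<in>Lp (s a) (d a'). \<Sum>h\<in>Lp (s a') (d a). if cmp a g = cmp a' h then S (cmp a g) * T (cmp b g) else 0)"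
  proof (intro eq_sum)
    fix g h assume g: "g \<in> Lp (s a) (d a')" and h: "h \<in> Lp (s a') (d a)"
    have gL: "g \<in> Lam" "r g = s a" using LpD[OF g] by auto
    have ag: "cmp a g \<in> Lam" "d (cmp a g) = deg_add (d a) (d a')" using cmpLp[OF ab(1) g] by auto
    have ah: "cmp a' h \<in> Lam" "d (cmp a' h) = deg_add (d a') (d a)" using cmpLp[OF a' h] by auto
    have dd: "d (cmp a g) = d (cmp a' h)" using ag ah deg_add_comm by metis
    have bg: "cmp b g \<in> Lam" using cL ab gL by auto
    have e1: "S (cmp a g) * T (cmp b g) * PP (cmp a g) \<approx> S (cmp a g) * T (cmp b g)"
    proof -
      have "S (cmp a g) * T (cmp b g) * PP (cmp a g) = S (cmp a g) * (T (cmp b g) * PP (cmp a g))"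
        by (simp add: mult.assoc)
      also have "\<dots> \<approx> S (cmp a g) * (T (cmp b g) * PP (cmp b g))"
        using ab(4)[OF gL] by (intro eq_ml)
      also have "\<dots> \<approx> S (cmp a g) * T (cmp b g)" using D3[OF bg] by (rule eq_ml)
      finally show ?thesis .
    qed
    have "S (cmp a g) * T (cmp b g) * PP (cmp a' h) \<approx> S (cmp a g) * T (cmp b g) * PP (cmp a g) * PP (cmp a' h)"
      using e1 by (rule eq_sym[OF eq_mr])
    also have "\<dots> \<approx> (if cmp a g = cmp a' h then S (cmp a g) * T (cmp b g) * PP (cmp a g) else 0)"
      by (rule PPorth_if[OF ag(1) ah(1) dd])
    also have "\<dots> \<approx> (if cmp a g = cmp a' h then S (cmp a g) * T (cmp b g) else 0)"
      using e1 by (rule eq_if)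
    finally show "S (cmp a g) * T (cmp b g) * PP (cmp a' h) \<approx> (if cmp a g = cmp a' h then S (cmp a g) * T (cmp b g) else 0)" .
  qed
  finally show ?thesis .
qed

lemma Lemma_L:
  assumes c: "cyc a b" and c': "cyc a' b'" and deg: "deg_add (d a) (d b') = deg_add (d a') (d b)"
  shows "S a * T b * PP a' \<approx> S a' * T b' * PP a"
proof -
  note ab = cycD[OF c] and ab' = cycD[OF c']
  have "S a * T b * PP a' \<approx>
    (\<Sum>g\<in>Lp (s a) (d a'). \<Sum>h\<in>Lp (s a') (d a). if cmp a g = cmp a' h then S (cmp a g) * T (cmp b g) else 0)"
    by (rule LA[OF c ab'(1)])
  also have "\<dots> \<approx> (\<Sum>g\<in>Lp (s a) (d a'). \<Sum>h\<in>Lp (s a') (d a). if cmp a' h = cmp a g then S (cmp a' h) * T (cmp b' h) else 0)"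
  proof (intro eq_sum)
    fix g h assume g: "g \<in> Lp (s a) (d a')" and h: "h \<in> Lp (s a') (d a)"
    have gL: "g \<in> Lam" "r g = s a" using LpD[OF g] by auto
    have hL: "h \<in> Lam" "r h = s a'" using LpD[OF h] by auto
    have ag: "cmp a g \<in> Lam" using cmpLp[OF ab(1) g] by auto
    have ah: "cmp a' h \<in> Lam" using cmpLp[OF ab'(1) h] by auto
    have bg: "cmp b g \<in> Lam" "d (cmp b g) = deg_add (d b) (d a')" using cL dc ab gL LpD[OF g] by auto
    have bh: "cmp b' h \<in> Lam" "d (cmp b' h) = deg_add (d b') (d a)" using cL dc ab' hL LpD[OF h] by auto
    have dd: "d (cmp b g) = d (cmp b' h)" using bg(2) bh(2) deg deg_add_comm by metis
    show "(if cmp a g = cmp a' h then S (cmp a g) * T (cmp b g) else 0) \<approx>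
          (if cmp a' h = cmp a g then S (cmp a' h) * T (cmp b' h) else 0)"
    proof (cases "cmp a g = cmp a' h")
      case False then show ?thesis by auto
    next
      case True
      show ?thesis
      proof (cases "cmp b g = cmp b' h")
        case True2: True
        then show ?thesis using True by simp
      next
        case False2: False
        let ?l = "cmp a g"
        have p1: "PP ?l \<approx> PP (cmp b g)" using ab(4)[OF gL] .
        have p2: "PP ?l \<approx> PP (cmp b' h)" using ab'(4)[OF hL] True by simp
        have "PP ?l \<approx> PP ?l * PP ?l" using D4[OF ag] by (rule eq_sym)
        also have "\<dots> \<approx> PP (cmp b g) * PP (cmp b' h)" using p1 p2 by (rule eq_mult)
        also have "\<dots> \<approx> 0" using PPorth[OF bg(1) bh(1) dd] False2 by simp
        finally have z: "PP ?l \<approx> 0" .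
        have z1: "S (cmp a g) * T (cmp b g) \<approx> 0"
        proof -
          have "S (cmp a g) * T (cmp b g) \<approx> PP ?l * S (cmp a g) * T (cmp b g)"
            using D2[OF ag] by (rule eq_sym[OF eq_mr])
          also have "\<dots> \<approx> 0 * S (cmp a g) * T (cmp b g)" using z by (intro eq_mr)
          finally show ?thesis by simp
        qed
        have z2: "S (cmp a' h) * T (cmp b' h) \<approx> 0"
        proof -
          have "S (cmp a' h) * T (cmp b' h) \<approx> PP (cmp a' h) * S (cmp a' h) * T (cmp b' h)"
            using D2[OF ah] by (rule eq_sym[OF eq_mr])
          also have "\<dots> \<approx> 0 * S (cmp a' h) * T (cmp b' h)" using z True by (intro eq_mr) simp
          finally show ?thesis by simp
        qed
        have "S (cmp a g) * T (cmp b g) \<approx> S (cmp a' h) * T (cmp b' h)"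
          by (rule eq_trans[OF z1 eq_sym[OF z2]])
        then show ?thesis using True by simp
      qed
    qed
  qed
  also have "\<dots> = (\<Sum>h\<in>Lp (s a') (d a). \<Sum>g\<in>Lp (s a) (d a'). if cmp a' h = cmp a g then S (cmp a' h) * T (cmp b' h) else 0)"
    by (rule sum.swap)
  also have "\<dots> \<approx> S a' * T b' * PP a"
    by (rule eq_sym[OF LA[OF c' ab(1)]])
  finally show ?thesis .
qed


definition GG :: "('k \<Rightarrow> nat) \<Rightarrow> 'p \<Rightarrow> 'p set" where
  "GG N a = Lp (s a) (dsub N (d a))"

lemma GGD: assumes "a \<in> Lam" "d a \<le> N" "g \<in> GG N a"
  shows "g \<in> Lam" "r g = s a" "cmp a g \<in> Lam" "d (cmp a g) = N" "s (cmp a g) = s g" "r (cmp a g) = r a"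
  using assms LpD[of g "s a" "dsub N (d a)"] cmpLp[of a g "dsub N (d a)"] deg_add_dsub[of "d a" N]
  unfolding GG_def by auto

lemma GGd: "g \<in> GG N a \<Longrightarrow> d g = dsub N (d a)"
  unfolding GG_def using LpD by blast

lemma GG_fin: "a \<in> Lam \<Longrightarrow> finite (GG N a)"
  unfolding GG_def using Lp_fin sV by auto

lemma TS:
  assumes b: "b \<in> Lam" and m: "m \<in> Lam" and db: "d b \<le> N" and dm: "d m \<le> N"
  shows "T b * S m \<approx> (\<Sum>g\<in>GG N b. \<Sum>h\<in>GG N m. if cmp b g = cmp m h then S g * T h else 0)"
proof -
  have A: "T b \<approx> (\<Sum>g\<in>GG N b. S g * T (cmp b g))"
  proof -
    have "T b \<approx> P (s b) * T b" using FTl[OF b] by (rule eq_sym)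
    also have "\<dots> \<approx> (\<Sum>g\<in>GG N b. S g * T g) * T b"
      unfolding GG_def using FK[OF sV[OF b]] by (rule eq_mr)
    also have "\<dots> = (\<Sum>g\<in>GG N b. S g * (T g * T b))"
      by (simp add: sum_distrib_right mult.assoc)
    also have "\<dots> \<approx> (\<Sum>g\<in>GG N b. S g * T (cmp b g))"
    proof (rule eq_sum)
      fix g assume "g \<in> GG N b"
      then have "g \<in> Lam" "r g = s b" using GGD[OF b db] by auto
      then show "S g * (T g * T b) \<approx> S g * T (cmp b g)" using FTT[OF b] by (intro eq_ml) auto
    qed
    finally show ?thesis .
  qed
  have B: "S m \<approx> (\<Sum>h\<in>GG N m. S (cmp m h) * T h)"
  proof -
    have "S m \<approx> S m * P (s m)" using FSr[OF m] by (rule eq_sym)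
    also have "\<dots> \<approx> S m * (\<Sum>h\<in>GG N m. S h * T h)"
      unfolding GG_def using FK[OF sV[OF m]] by (rule eq_ml)
    also have "\<dots> = (\<Sum>h\<in>GG N m. (S m * S h) * T h)"
      by (simp add: sum_distrib_left mult.assoc)
    also have "\<dots> \<approx> (\<Sum>h\<in>GG N m. S (cmp m h) * T h)"
    proof (rule eq_sum)
      fix h assume "h \<in> GG N m"
      then have "h \<in> Lam" "r h = s m" using GGD[OF m dm] by auto
      then show "S m * S h * T h \<approx> S (cmp m h) * T h" using FSS[OF m] by (intro eq_mr) auto
    qed
    finally show ?thesis .
  qed
  have "T b * S m \<approx> (\<Sum>g\<in>GG N b. S g * T (cmp b g)) * (\<Sum>h\<in>GG N m. S (cmp m h) * T h)"
    using A B by (rule eq_mult)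
  also have "\<dots> = (\<Sum>g\<in>GG N b. \<Sum>h\<in>GG N m. S g * (T (cmp b g) * S (cmp m h)) * T h)"
    by (simp add: sum_product mult.assoc)
  also have "\<dots> \<approx> (\<Sum>g\<in>GG N b. \<Sum>h\<in>GG N m. if cmp b g = cmp m h then S g * T h else 0)"
  proof (intro eq_sum)
    fix g h assume g: "g \<in> GG N b" and h: "h \<in> GG N m"
    note gg = GGD[OF b db g] and hh = GGD[OF m dm h]
    have "S g * (T (cmp b g) * S (cmp m h)) * T h \<approx> S g * (if cmp b g = cmp m h then P (s (cmp b g)) else 0) * T h"
      using FTS[OF gg(3) hh(3)] gg(4) hh(4) by (intro eq_mr eq_ml) auto
    also have "\<dots> = (if cmp b g = cmp m h then S g * P (s g) * T h else 0)"
      by (simp only: gg(5) mif_l mif_r)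
    also have "\<dots> \<approx> (if cmp b g = cmp m h then S g * T h else 0)"
      using FSr[OF gg(1)] by (intro eq_if eq_mr)
    finally show "S g * (T (cmp b g) * S (cmp m h)) * T h \<approx> (if cmp b g = cmp m h then S g * T h else 0)" .
  qed
  finally show ?thesis .
qed

lemma XY:
  assumes "a \<in> Lam" "b \<in> Lam" "m \<in> Lam" "n \<in> Lam" "s a = s b" "s m = s n" "d b \<le> N" "d m \<le> N"
  shows "S a * T b * (S m * T n) \<approx>
    (\<Sum>g\<in>GG N b. \<Sum>h\<in>GG N m. if cmp b g = cmp m h then S (cmp a g) * T (cmp n h) else 0)"
proof -
  have "S a * T b * (S m * T n) = S a * (T b * S m) * T n" by (simp add: mult.assoc)
  also have "\<dots> \<approx> S a * (\<Sum>g\<in>GG N b. \<Sum>h\<in>GG N m. if cmp b g = cmp m h then S g * T h else 0) * T n"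
    using TS[OF assms(2,3,7,8)] by (intro eq_mr eq_ml)
  also have "\<dots> = (\<Sum>g\<in>GG N b. \<Sum>h\<in>GG N m. if cmp b g = cmp m h then (S a * S g) * (T h * T n) else 0)"
  proof -
    have "S a * (\<Sum>g\<in>GG N b. \<Sum>h\<in>GG N m. if cmp b g = cmp m h then S g * T h else 0) * T n =
      (\<Sum>g\<in>GG N b. \<Sum>h\<in>GG N m. S a * (if cmp b g = cmp m h then S g * T h else 0) * T n)"
      by (simp only: sum_distrib_left sum_distrib_right)
    also have "\<dots> = (\<Sum>g\<in>GG N b. \<Sum>h\<in>GG N m. if cmp b g = cmp m h then (S a * S g) * (T h * T n) else 0)"
      by (rule sum.cong[OF refl], rule sum.cong[OF refl]) (simp add: mult.assoc)
    finally show ?thesis .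
  qed
  also have "\<dots> \<approx> (\<Sum>g\<in>GG N b. \<Sum>h\<in>GG N m. if cmp b g = cmp m h then S (cmp a g) * T (cmp n h) else 0)"
  proof (intro eq_sum eq_if)
    fix g h assume g: "g \<in> GG N b" and h: "h \<in> GG N m"
    note gg = GGD[OF assms(2,7) g] and hh = GGD[OF assms(3,8) h]
    show "S a * S g * (T h * T n) \<approx> S (cmp a g) * T (cmp n h)"
    proof (rule eq_mult)
      show "S a * S g \<approx> S (cmp a g)" using FSS[OF assms(1) gg(1)] gg(2) assms(5) by simp
      show "T h * T n \<approx> T (cmp n h)" using FTT[OF assms(4) hh(1)] hh(2) assms(6) by simp
    qed
  qed
  finally show ?thesis .
qed

lemma cyc_ext:
  assumes ca': "cyc a b" and cm: "cyc m n" and db: "d b \<le> N" and dm: "d m \<le> N"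
    and g: "g \<in> GG N b" and h: "h \<in> GG N m" and e: "cmp b g = cmp m h"
  shows "cyc (cmp a g) (cmp n h)"
proof -
  note ab = cycD[OF ca'] and mn = cycD[OF cm]
  note gg = GGD[OF ab(2) db g] and hh = GGD[OF mn(1) dm h]
  have sgh: "s g = s h" using gg(5) hh(5) e by metis
  have ag: "cmp a g \<in> Lam" "s (cmp a g) = s g" using ab gg cL sc by auto
  have nh: "cmp n h \<in> Lam" "s (cmp n h) = s h" using mn hh cL sc by auto
  show ?thesis unfolding cyc_def
  proof (intro conjI ballI impI)
    show "cmp a g \<in> Lam" "cmp n h \<in> Lam" by (fact ag(1), fact nh(1))
    show "s (cmp a g) = s (cmp n h)" using ag nh sgh by simp
    fix x assume x: "x \<in> Lam" "r x = s (cmp a g)"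
    then have rx: "r x = s g" using ag by simp
    have gx: "cmp g x \<in> Lam" "r (cmp g x) = s a" using cL rc gg x rx ab by auto
    have hx: "cmp h x \<in> Lam" "r (cmp h x) = s m" using cL rc hh x rx sgh by auto
    have "PP (cmp (cmp a g) x) = PP (cmp a (cmp g x))" using ca ab gg x rx by simp
    also have "\<dots> \<approx> PP (cmp b (cmp g x))" using ab(4)[OF gx] .
    also have "cmp b (cmp g x) = cmp m (cmp h x)"
    proof -
      have "cmp b (cmp g x) = cmp (cmp b g) x" using ca[OF ab(2) gg(1) x(1) gg(2)[symmetric] rx[symmetric]] by simp
      also have "\<dots> = cmp (cmp m h) x" using e by simp
      also have "\<dots> = cmp m (cmp h x)" using ca[OF mn(1) hh(1) x(1) hh(2)[symmetric]] rx sgh by simp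
      finally show ?thesis .
    qed
    also have "PP (cmp m (cmp h x)) \<approx> PP (cmp n (cmp h x))" using mn(4)[OF hx] .
    also have "cmp n (cmp h x) = cmp (cmp n h) x" using ca mn hh x rx sgh by simp
    finally show "PP (cmp (cmp a g) x) \<approx> PP (cmp (cmp n h) x)" .
  qed
qed

definition Qf :: "('k \<Rightarrow> nat) \<Rightarrow> 'p \<Rightarrow> 'p \<Rightarrow> 'p \<Rightarrow> 'b" where
  "Qf N a b m = (\<Sum>g\<in>GG N b. \<Sum>h\<in>GG N m. if cmp b g = cmp m h then PP (cmp a g) else 0)"

lemma DE: assumes a: "a \<in> Lam" and b: "b \<in> Lam" and da: "d a \<le> N" and db: "d b \<le> N"
  shows "PP a * PP b \<approx> (\<Sum>g\<in>GG N a. \<Sum>h\<in>GG N b. if cmp a g = cmp b h then PP (cmp a g) else 0)"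
proof -
  have "PP a * PP b \<approx> (\<Sum>g\<in>GG N a. PP (cmp a g)) * (\<Sum>h\<in>GG N b. PP (cmp b h))"
    unfolding GG_def using PPexp[OF a] PPexp[OF b] by (rule eq_mult)
  also have "\<dots> = (\<Sum>g\<in>GG N a. \<Sum>h\<in>GG N b. PP (cmp a g) * PP (cmp b h))"
    by (rule sum_product)
  also have "\<dots> \<approx> (\<Sum>g\<in>GG N a. \<Sum>h\<in>GG N b. if cmp a g = cmp b h then PP (cmp a g) else 0)"
  proof (intro eq_sum)
    fix g h assume g: "g \<in> GG N a" and h: "h \<in> GG N b"
    note gg = GGD[OF a da g] and hh = GGD[OF b db h]
    show "PP (cmp a g) * PP (cmp b h) \<approx> (if cmp a g = cmp b h then PP (cmp a g) else 0)"
      using PPorth[OF gg(3) hh(3)] gg(4) hh(4) by simp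
  qed
  finally show ?thesis .
qed

lemma Qb: assumes c: "cyc a b" and db: "d b \<le> N"
  shows "Qf N a b m \<approx> (\<Sum>g\<in>GG N b. \<Sum>h\<in>GG N m. if cmp b g = cmp m h then PP (cmp b g) else 0)"
  unfolding Qf_def
proof (intro eq_sum eq_if)
  fix g assume g: "g \<in> GG N b"
  note ab = cycD[OF c]
  note gg = GGD[OF ab(2) db g]
  show "PP (cmp a g) \<approx> PP (cmp b g)" using ab(4)[of g] gg ab by auto
qed

lemma Q_eq: assumes c: "cyc a b" and m: "m \<in> Lam" and db: "d b \<le> N" and dm: "d m \<le> N"
  shows "Qf N a b m \<approx> PP b * PP m"
  using eq_trans[OF Qb[OF c db] eq_sym[OF DE[OF cycD(2)[OF c] m db dm]]] .

lemma DC: assumes a: "a \<in> Lam" and b: "b \<in> Lam" shows "PP a * PP b \<approx> PP b * PP a"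
proof -
  define N where "N = deg_add (d a) (d b)"
  have da: "d a \<le> N" and db: "d b \<le> N" unfolding N_def by (auto simp: le_fun_def deg_add_def)
  have "PP a * PP b \<approx> (\<Sum>g\<in>GG N a. \<Sum>h\<in>GG N b. if cmp a g = cmp b h then PP (cmp a g) else 0)"
    by (rule DE[OF a b da db])
  also have "\<dots> = (\<Sum>h\<in>GG N b. \<Sum>g\<in>GG N a. if cmp b h = cmp a g then PP (cmp b h) else 0)"
    by (subst sum.swap) (rule sum.cong[OF refl], rule sum.cong[OF refl], auto)
  also have "\<dots> \<approx> PP b * PP a" by (rule eq_sym[OF DE[OF b a db da]])
  finally show ?thesis .
qed

lemma Q_absorb:
  assumes c: "cyc a b" and m: "m \<in> Lam" and db: "d b \<le> N" and dm: "d m \<le> N"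
    and g: "g \<in> GG N b" and h: "h \<in> GG N m" and e: "cmp b g = cmp m h"
  shows "PP (cmp b g) * Qf N a b m \<approx> PP (cmp b g)"
proof -
  note ab = cycD[OF c]
  note gg = GGD[OF ab(2) db g] and hh = GGD[OF m dm h]
  let ?l = "cmp b g"
  have "PP ?l * Qf N a b m \<approx> PP ?l * (\<Sum>g2\<in>GG N b. \<Sum>h2\<in>GG N m. if cmp b g2 = cmp m h2 then PP (cmp b g2) else 0)"
    using Qb[OF c db] by (rule eq_ml)
  also have "\<dots> = (\<Sum>g2\<in>GG N b. \<Sum>h2\<in>GG N m. if cmp b g2 = cmp m h2 then PP ?l * PP (cmp b g2) else 0)"
    by (simp add: sum_distrib_left mif_r)
  also have "\<dots> \<approx> (\<Sum>g2\<in>GG N b. \<Sum>h2\<in>GG N m. if cmp b g2 = cmp m h2 then (if ?l = cmp b g2 then PP ?l else 0) else 0)"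
  proof (intro eq_sum eq_if)
    fix g2 assume g2: "g2 \<in> GG N b"
    note gg2 = GGD[OF ab(2) db g2]
    show "PP ?l * PP (cmp b g2) \<approx> (if ?l = cmp b g2 then PP ?l else 0)"
      using PPorth[OF gg(3) gg2(3)] gg(4) gg2(4) by simp
  qed
  also have "\<dots> = (\<Sum>g2\<in>GG N b. if g2 = g then (\<Sum>h2\<in>GG N m. if h2 = h then PP ?l else 0) else 0)"
  proof (rule sum.cong[OF refl])
    fix g2 assume g2: "g2 \<in> GG N b"
    note gg2 = GGD[OF ab(2) db g2]
    show "(\<Sum>h2\<in>GG N m. if cmp b g2 = cmp m h2 then (if ?l = cmp b g2 then PP ?l else 0) else 0) =
      (if g2 = g then (\<Sum>h2\<in>GG N m. if h2 = h then PP ?l else 0) else 0)"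
    proof (cases "g2 = g")
      case True
      have "(\<Sum>h2\<in>GG N m. if cmp b g2 = cmp m h2 then (if ?l = cmp b g2 then PP ?l else 0) else 0) =
         (\<Sum>h2\<in>GG N m. if h2 = h then PP ?l else 0)"
      proof (rule sum.cong[OF refl])
        fix h2 assume h2: "h2 \<in> GG N m"
        note hh2 = GGD[OF m dm h2]
        have "cmp m h = cmp m h2 \<Longrightarrow> h = h2"
          using cancel[OF m hh(1) hh2(1) hh(2) hh2(2)] GGd[OF h] GGd[OF h2] by simp
        then show "(if cmp b g2 = cmp m h2 then (if ?l = cmp b g2 then PP ?l else 0) else 0) = (if h2 = h then PP ?l else 0)"
          using e True by auto
      qed
      then show ?thesis using True by simp
    next
      case False
      have "?l \<noteq> cmp b g2" using cancel[OF ab(2) gg(1) gg2(1) gg(2) gg2(2)] GGd[OF g] GGd[OF g2] False by auto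
      then show ?thesis using False by simp
    qed
  qed
  also have "\<dots> = PP ?l"
    using g h GG_fin[OF ab(2)] GG_fin[OF m] by (simp add: sum.delta')
  finally show ?thesis .
qed

lemma E_Q:
  assumes ca': "cyc a b" and cm: "cyc m n" and db: "d b \<le> N" and dm: "d m \<le> N"
    and g: "g \<in> GG N b" and h: "h \<in> GG N m" and e: "cmp b g = cmp m h"
  shows "S (cmp a g) * T (cmp n h) \<approx> S (cmp a g) * T (cmp n h) * Qf N a b m"
proof -
  note ab = cycD[OF ca'] and mn = cycD[OF cm]
  note gg = GGD[OF ab(2) db g]
  have cc: "cyc (cmp a g) (cmp n h)" by (rule cyc_ext[OF ca' cm db dm g h e])
  let ?e = "S (cmp a g) * T (cmp n h)"
  have p: "PP (cmp a g) \<approx> PP (cmp b g)" using ab(4)[of g] gg ab by auto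
  have "?e \<approx> ?e * PP (cmp a g)" by (rule eq_sym[OF RS[OF cc]])
  also have "\<dots> \<approx> ?e * PP (cmp b g)" using p by (rule eq_ml)
  also have "\<dots> \<approx> ?e * (PP (cmp b g) * Qf N a b m)"
    by (rule eq_ml[OF eq_sym[OF Q_absorb[OF ca' mn(1) db dm g h e]]])
  also have "\<dots> = ?e * PP (cmp b g) * Qf N a b m" by (simp add: mult.assoc)
  also have "\<dots> \<approx> ?e * PP (cmp a g) * Qf N a b m" by (rule eq_mr[OF eq_ml[OF eq_sym[OF p]]])
  also have "\<dots> \<approx> ?e * Qf N a b m" using RS[OF cc] by (rule eq_mr)
  finally show ?thesis .
qed


lemma MG:
  assumes cab: "cyc a b" and cmn: "cyc m n"
  shows "S a * T b * (S m * T n) \<approx> S m * T n * (S a * T b)"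
proof -
  note ab = cycD[OF cab] and mn = cycD[OF cmn]
  define N where "N = deg_add (deg_add (d a) (d b)) (deg_add (d m) (d n))"
  have da: "d a \<le> N" and db: "d b \<le> N" and dm: "d m \<le> N" and dn: "d n \<le> N"
    unfolding N_def by (auto simp: le_fun_def deg_add_def)
  define Q where "Q = Qf N a b m"
  define Q' where "Q' = Qf N m n a"
  have QQ: "Q \<approx> Q'"
  proof -
    have "Q \<approx> PP b * PP m" unfolding Q_def by (rule Q_eq[OF cab mn(1) db dm])
    also have "\<dots> \<approx> PP a * PP n" by (rule eq_mult[OF eq_sym[OF cyc0[OF cab]] cyc0[OF cmn]])
    also have "\<dots> \<approx> PP n * PP a" by (rule DC[OF ab(1) mn(2)])
    also have "\<dots> \<approx> Q'" unfolding Q'_def by (rule eq_sym[OF Q_eq[OF cmn ab(1) dn da]])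
    finally show ?thesis .
  qed
  have degs: "\<And>g g' h h'. g \<in> GG N b \<Longrightarrow> h \<in> GG N m \<Longrightarrow> h' \<in> GG N n \<Longrightarrow> g' \<in> GG N a \<Longrightarrow>
      deg_add (d (cmp a g)) (d (cmp b g')) = deg_add (d (cmp m h')) (d (cmp n h))"
  proof -
    fix g g' h h' assume g: "g \<in> GG N b" and h: "h \<in> GG N m" and h': "h' \<in> GG N n" and g': "g' \<in> GG N a"
    have 1: "d (cmp a g) = deg_add (d a) (dsub N (d b))"
      using dc[OF ab(1) GGD(1)[OF ab(2) db g]] GGD(2)[OF ab(2) db g] ab(3) GGd[OF g] by simp
    have 2: "d (cmp b g') = deg_add (d b) (dsub N (d a))"
      using dc[OF ab(2) GGD(1)[OF ab(1) da g']] GGD(2)[OF ab(1) da g'] ab(3) GGd[OF g'] by simp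
    have 3: "d (cmp m h') = deg_add (d m) (dsub N (d n))"
      using dc[OF mn(1) GGD(1)[OF mn(2) dn h']] GGD(2)[OF mn(2) dn h'] mn(3) GGd[OF h'] by simp
    have 4: "d (cmp n h) = deg_add (d n) (dsub N (d m))"
      using dc[OF mn(2) GGD(1)[OF mn(1) dm h]] GGD(2)[OF mn(1) dm h] mn(3) GGd[OF h] by simp
    show "deg_add (d (cmp a g)) (d (cmp b g')) = deg_add (d (cmp m h')) (d (cmp n h))"
      unfolding 1 2 3 4 deg_add_def dsub_def
    proof (rule ext)
      fix i
      have "d a i \<le> N i" "d b i \<le> N i" "d m i \<le> N i" "d n i \<le> N i"
        using da db dm dn by (simp_all add: le_fun_def)
      then show "d a i + (N i - d b i) + (d b i + (N i - d a i)) = d m i + (N i - d n i) + (d n i + (N i - d m i))"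
        by linarith
    qed
  qed
  let ?c = "\<lambda>g h. cmp b g = cmp m h"
  let ?c' = "\<lambda>h' g'. cmp n h' = cmp a g'"
  let ?e = "\<lambda>g h. S (cmp a g) * T (cmp n h)"
  let ?f = "\<lambda>h' g'. S (cmp m h') * T (cmp b g')"
  have "S a * T b * (S m * T n) \<approx> (\<Sum>g\<in>GG N b. \<Sum>h\<in>GG N m. if ?c g h then ?e g h else 0)"
    by (rule XY[OF ab(1,2) mn(1,2) ab(3) mn(3) db dm])
  also have "\<dots> \<approx> (\<Sum>g\<in>GG N b. \<Sum>h\<in>GG N m. if ?c g h then ?e g h * Q' else 0)"
  proof (intro eq_sum eq_if)
    fix g h assume g: "g \<in> GG N b" and h: "h \<in> GG N m" and c: "?c g h"
    have "?e g h \<approx> ?e g h * Q" unfolding Q_def by (rule E_Q[OF cab cmn db dm g h c])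
    also have "\<dots> \<approx> ?e g h * Q'" using QQ by (rule eq_ml)
    finally show "?e g h \<approx> ?e g h * Q'" .
  qed
  also have "\<dots> = (\<Sum>g\<in>GG N b. \<Sum>h\<in>GG N m. \<Sum>h'\<in>GG N n. \<Sum>g'\<in>GG N a.
      if ?c g h then (if ?c' h' g' then ?e g h * PP (cmp m h') else 0) else 0)"
    unfolding Q'_def Qf_def
    by (rule sum.cong[OF refl], rule sum.cong[OF refl]) (simp add: sum_distrib_left mif_r)
  also have "\<dots> \<approx> (\<Sum>g\<in>GG N b. \<Sum>h\<in>GG N m. \<Sum>h'\<in>GG N n. \<Sum>g'\<in>GG N a.
      if ?c g h then (if ?c' h' g' then ?f h' g' * PP (cmp a g) else 0) else 0)"
  proof (intro eq_sum eq_if)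
    fix g h h' g' assume g: "g \<in> GG N b" and h: "h \<in> GG N m" and h': "h' \<in> GG N n" and g': "g' \<in> GG N a"
      and c: "?c g h" and c': "?c' h' g'"
    have cy1: "cyc (cmp a g) (cmp n h)" by (rule cyc_ext[OF cab cmn db dm g h c])
    have cy2: "cyc (cmp m h') (cmp b g')" by (rule cyc_ext[OF cmn cab dn da h' g' c'])
    show "?e g h * PP (cmp m h') \<approx> ?f h' g' * PP (cmp a g)"
      by (rule Lemma_L[OF cy1 cy2 degs[OF g h h' g']])
  qed
  also have "\<dots> = (\<Sum>h'\<in>GG N n. \<Sum>g'\<in>GG N a. \<Sum>g\<in>GG N b. \<Sum>h\<in>GG N m.
      if ?c' h' g' then (if ?c g h then ?f h' g' * PP (cmp a g) else 0) else 0)"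
    by (subst sum4_swap) (rule sum.cong[OF refl], rule sum.cong[OF refl], rule sum.cong[OF refl],
        rule sum.cong[OF refl], simp)
  also have "\<dots> = (\<Sum>h'\<in>GG N n. \<Sum>g'\<in>GG N a. if ?c' h' g' then ?f h' g' * Q else 0)"
    unfolding Q_def Qf_def
    by (rule sum.cong[OF refl], rule sum.cong[OF refl]) (simp add: sum_distrib_left mif_r)
  also have "\<dots> \<approx> (\<Sum>h'\<in>GG N n. \<Sum>g'\<in>GG N a. if ?c' h' g' then ?f h' g' else 0)"
  proof (intro eq_sum eq_if)
    fix h' g' assume h': "h' \<in> GG N n" and g': "g' \<in> GG N a" and c': "?c' h' g'"
    have "?f h' g' * Q \<approx> ?f h' g' * Q'" using QQ by (rule eq_ml)
    also have "\<dots> \<approx> ?f h' g'" unfolding Q'_def by (rule eq_sym[OF E_Q[OF cmn cab dn da h' g' c']])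
    finally show "?f h' g' * Q \<approx> ?f h' g'" .
  qed
  also have "\<dots> \<approx> S m * T n * (S a * T b)"
    by (rule eq_sym[OF XY[OF mn(1,2) ab(1,2) mn(3) ab(3) dn da]])
  finally show ?thesis .
qed

end



definition JJ :: "'p set \<Rightarrow> 'p set \<Rightarrow> ('p \<Rightarrow> 'p) \<Rightarrow> ('p \<Rightarrow> 'p) \<Rightarrow> ('p \<Rightarrow> 'p \<Rightarrow> 'p)
   \<Rightarrow> ('p \<Rightarrow> ('k \<Rightarrow> nat)) \<Rightarrow> ('p kpgen list \<Rightarrow>\<^sub>0 'r::comm_ring_1) set" where
  "JJ Lam V r s cmp d = {Z. Poly_Mapping.lookup Z \<in> kp_ideal Lam V r s cmp d}"

definition Pm :: "'p \<Rightarrow> ('p kpgen list \<Rightarrow>\<^sub>0 'r::comm_ring_1)" where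
  "Pm v = Poly_Mapping.single [Pgen v] 1"
definition Sm :: "('p \<Rightarrow> ('k \<Rightarrow> nat)) \<Rightarrow> 'p \<Rightarrow> ('p kpgen list \<Rightarrow>\<^sub>0 'r::comm_ring_1)" where
  "Sm d l = Poly_Mapping.single (if d l = deg_zero then [Pgen l] else [Sgen l]) 1"
definition Tm :: "('p \<Rightarrow> ('k \<Rightarrow> nat)) \<Rightarrow> 'p \<Rightarrow> ('p kpgen list \<Rightarrow>\<^sub>0 'r::comm_ring_1)" where
  "Tm d l = Poly_Mapping.single (if d l = deg_zero then [Pgen l] else [Sstar l]) 1"

lemma lk_mult: "Poly_Mapping.lookup (X * Y) = fa_mult (Poly_Mapping.lookup X) (Poly_Mapping.lookup (Y :: 'p kpgen list \<Rightarrow>\<^sub>0 'b::comm_ring_1))"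
  unfolding fa_mult_def by (rule ext) (rule lookup_mult_list)

lemma lk_mono: "Poly_Mapping.lookup (Poly_Mapping.single w (1::'r::comm_ring_1)) = fa_mono w"
  by (auto simp: fun_eq_iff lookup_single when_def fa_mono_def)

lemma lk_Pm: "Poly_Mapping.lookup (Pm v :: ('p kpgen list \<Rightarrow>\<^sub>0 'r::comm_ring_1)) = kp_p v"
  unfolding Pm_def kp_p_def by (rule lk_mono)
lemma lk_Sm: "Poly_Mapping.lookup (Sm d l :: ('p kpgen list \<Rightarrow>\<^sub>0 'r::comm_ring_1)) = kp_s d l"
  unfolding Sm_def kp_s_def by (rule lk_mono)
lemma lk_Tm: "Poly_Mapping.lookup (Tm d l :: ('p kpgen list \<Rightarrow>\<^sub>0 'r::comm_ring_1)) = kp_sstar d l"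
  unfolding Tm_def kp_sstar_def by (rule lk_mono)

lemma lk_diff: "Poly_Mapping.lookup (X - Y) = fa_sub (Poly_Mapping.lookup X) (Poly_Mapping.lookup (Y :: 'p kpgen list \<Rightarrow>\<^sub>0 'b::comm_ring_1))"
  by (simp add: fun_eq_iff lookup_minus fa_sub_def)
lemma lk_add: "Poly_Mapping.lookup (X + Y) = fa_add (Poly_Mapping.lookup X) (Poly_Mapping.lookup (Y :: 'p kpgen list \<Rightarrow>\<^sub>0 'b::comm_ring_1))"
  by (simp add: fun_eq_iff lookup_add fa_add_def)
lemma lk_zero: "Poly_Mapping.lookup (0 :: 'p kpgen list \<Rightarrow>\<^sub>0 'b::comm_ring_1) = fa_zero"
  by (simp add: fun_eq_iff fa_zero_def)
lemma lk_sum: "Poly_Mapping.lookup (sum F A) = fa_sum A (\<lambda>a. Poly_Mapping.lookup (F a :: 'p kpgen list \<Rightarrow>\<^sub>0 'b::comm_ring_1))"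
  by (simp add: fun_eq_iff lookup_sum fa_sum_def)

lemma lk_scl: "Poly_Mapping.lookup (Poly_Mapping.single [] c * X) w = c * Poly_Mapping.lookup (X :: 'a list \<Rightarrow>\<^sub>0 'b::comm_ring_1) w"
proof -
  have "Poly_Mapping.lookup (Poly_Mapping.single [] c * X) w =
      (\<Sum>i\<le>length w. (c when [] = take i w) * Poly_Mapping.lookup X (drop i w))"
    by (simp add: lookup_mult_list lookup_single)
  also have "\<dots> = (\<Sum>i\<le>length w. if i = 0 then c * Poly_Mapping.lookup X w else 0)"
  proof (rule sum.cong[OF refl])
    fix i assume "i \<in> {..length w}"
    then show "(c when [] = take i w) * Poly_Mapping.lookup X (drop i w) = (if i = 0 then c * Poly_Mapping.lookup X w else 0)"
      by (cases "w = []") (auto simp: when_def)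
  qed
  also have "\<dots> = c * Poly_Mapping.lookup X w" by simp
  finally show ?thesis .
qed

lemma lk_scr: "Poly_Mapping.lookup (X * Poly_Mapping.single [] c) w = Poly_Mapping.lookup (X :: 'a list \<Rightarrow>\<^sub>0 'b::comm_ring_1) w * c"
proof -
  have "Poly_Mapping.lookup (X * Poly_Mapping.single [] c) w =
      (\<Sum>i\<le>length w. Poly_Mapping.lookup X (take i w) * (c when [] = drop i w))"
    by (simp add: lookup_mult_list lookup_single)
  also have "\<dots> = (\<Sum>i\<le>length w. if i = length w then Poly_Mapping.lookup X w * c else 0)"
  proof (rule sum.cong[OF refl])
    fix i assume "i \<in> {..length w}"
    then show "Poly_Mapping.lookup X (take i w) * (c when [] = drop i w) = (if i = length w then Poly_Mapping.lookup X w * c else 0)"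
      by (auto simp: when_def)
  qed
  also have "\<dots> = Poly_Mapping.lookup X w * c" by simp
  finally show ?thesis .
qed

lemma central: "Poly_Mapping.single [] c * X = X * Poly_Mapping.single [] (c::'b::comm_ring_1)"
  by (rule poly_mapping_eqI) (simp add: lk_scl lk_scr mult.commute)

lemma single_one_list: "Poly_Mapping.single [] 1 = (1 :: 'a list \<Rightarrow>\<^sub>0 'b::comm_ring_1)"
  using single_one[where 'a="'a list" and 'b='b] by (simp add: zero_list_def)

lemma decomp: "A = (\<Sum>w\<in>Poly_Mapping.keys A. Poly_Mapping.single [] (Poly_Mapping.lookup A w) * Poly_Mapping.single w (1::'b::comm_ring_1))"
proof (rule poly_mapping_eqI)
  fix k
  have e: "\<And>w. Poly_Mapping.single [] (Poly_Mapping.lookup A w) * Poly_Mapping.single w (1::'b) = Poly_Mapping.single w (Poly_Mapping.lookup A w)"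
    by (simp add: mult_single plus_list_def)
  show "Poly_Mapping.lookup A k = Poly_Mapping.lookup (\<Sum>w\<in>Poly_Mapping.keys A. Poly_Mapping.single [] (Poly_Mapping.lookup A w) * Poly_Mapping.single w 1) k"
    by (simp add: e lookup_sum lookup_single when_def in_keys_iff)
qed

context
  fixes Lam V :: "'p set" and r s :: "'p \<Rightarrow> 'p" and cmp :: "'p \<Rightarrow> 'p \<Rightarrow> 'p"
    and d :: "'p \<Rightarrow> ('k::finite \<Rightarrow> nat)"
begin

abbreviation "J \<equiv> (JJ Lam V r s cmp d :: ('p kpgen list \<Rightarrow>\<^sub>0 'r::comm_ring_1) set)"

lemma J0: "0 \<in> J"
  by (simp add: JJ_def lk_zero kp_ideal_def fa_ideal.zero)

lemma Jadd: "x \<in> J \<Longrightarrow> y \<in> J \<Longrightarrow> x + y \<in> J"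
  by (simp add: JJ_def lk_add kp_ideal_def fa_ideal.add)

lemma Jsc: "x \<in> J \<Longrightarrow> Poly_Mapping.single [] c * x \<in> J"
proof -
  assume "x \<in> J"
  then have "fa_smult c (Poly_Mapping.lookup x) \<in> kp_ideal Lam V r s cmp d"
    by (simp add: JJ_def kp_ideal_def fa_ideal.smult)
  moreover have "Poly_Mapping.lookup (Poly_Mapping.single [] c * x) = fa_smult c (Poly_Mapping.lookup x)"
    by (simp add: fun_eq_iff lk_scl fa_smult_def)
  ultimately show ?thesis by (simp add: JJ_def)
qed

lemma Jmono: "x \<in> J \<Longrightarrow> Poly_Mapping.single u 1 * (x * Poly_Mapping.single w 1) \<in> J"
  by (simp add: JJ_def lk_mult lk_mono kp_ideal_def fa_ideal.mult)

lemma Jsum: "(\<And>i. i \<in> A \<Longrightarrow> f i \<in> J) \<Longrightarrow> sum f A \<in> J"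
proof (induction A rule: infinite_finite_induct)
  case (infinite A) then show ?case using J0 by simp
next
  case empty then show ?case using J0 by simp
next
  case (insert x F)
  have "f x \<in> J" using insert.prems by simp
  moreover have "sum f F \<in> J" using insert.prems by (intro insert.IH) simp
  ultimately show ?case using insert.hyps Jadd by simp
qed

lemma Jl: "x \<in> J \<Longrightarrow> a * x \<in> J"
proof -
  assume x: "x \<in> J"
  have "a * x = (\<Sum>w\<in>Poly_Mapping.keys a. Poly_Mapping.single [] (Poly_Mapping.lookup a w) * Poly_Mapping.single w 1) * x"
    by (subst decomp[of a]) simp
  also have "\<dots> = (\<Sum>w\<in>Poly_Mapping.keys a. Poly_Mapping.single [] (Poly_Mapping.lookup a w) * (Poly_Mapping.single w 1 * (x * Poly_Mapping.single [] 1)))"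
    by (simp add: sum_distrib_right mult.assoc single_one_list)
  finally have e: "a * x = (\<Sum>w\<in>Poly_Mapping.keys a. Poly_Mapping.single [] (Poly_Mapping.lookup a w) * (Poly_Mapping.single w 1 * (x * Poly_Mapping.single [] 1)))" .
  have "(\<Sum>w\<in>Poly_Mapping.keys a. Poly_Mapping.single [] (Poly_Mapping.lookup a w) * (Poly_Mapping.single w 1 * (x * Poly_Mapping.single [] 1))) \<in> J"
    by (intro Jsum Jsc Jmono x)
  then show ?thesis using e by simp
qed

lemma Jr: "x \<in> J \<Longrightarrow> x * a \<in> J"
proof -
  assume x: "x \<in> J"
  have "x * a = x * (\<Sum>w\<in>Poly_Mapping.keys a. Poly_Mapping.single [] (Poly_Mapping.lookup a w) * Poly_Mapping.single w 1)"
    by (subst decomp[of a]) simp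
  also have "\<dots> = (\<Sum>w\<in>Poly_Mapping.keys a. Poly_Mapping.single [] (Poly_Mapping.lookup a w) * (Poly_Mapping.single [] 1 * (x * Poly_Mapping.single w 1)))"
    unfolding sum_distrib_left
  proof (rule sum.cong[OF refl])
    fix w
    let ?C = "Poly_Mapping.single [] (Poly_Mapping.lookup a w)" and ?M = "Poly_Mapping.single w (1::'r::comm_ring_1)"
    have "x * (?C * ?M) = (x * ?C) * ?M" by (simp add: mult.assoc)
    also have "x * ?C = ?C * x" by (rule central[symmetric])
    also have "?C * x * ?M = ?C * (Poly_Mapping.single [] 1 * (x * ?M))" by (simp add: mult.assoc single_one_list)
    finally show "x * (?C * ?M) = ?C * (Poly_Mapping.single [] 1 * (x * ?M))" .
  qed
  finally have e: "x * a = (\<Sum>w\<in>Poly_Mapping.keys a. Poly_Mapping.single [] (Poly_Mapping.lookup a w) * (Poly_Mapping.single [] 1 * (x * Poly_Mapping.single w 1)))" .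
  have "(\<Sum>w\<in>Poly_Mapping.keys a. Poly_Mapping.single [] (Poly_Mapping.lookup a w) * (Poly_Mapping.single [] 1 * (x * Poly_Mapping.single w 1))) \<in> J"
    by (intro Jsum Jsc Jmono x)
  then show ?thesis using e by simp
qed

lemma idlJ: "idl J"
  by (rule idl.intro) (auto intro: J0 Jadd Jl Jr)


lemma r1a: "v \<in> V \<Longrightarrow> (fa_sub (fa_mult (kp_p v) (kp_p v)) (kp_p v) :: ('p, 'r::comm_ring_1) fa) \<in> kp_relations Lam V r s cmp d"
  unfolding kp_relations_def apply (rule UnI1, rule UnI1, rule UnI1, rule UnI1, rule UnI1, rule UnI1, rule UnI1, rule UnI1, rule UnI1) by blast

lemma r1b: "v \<in> V \<Longrightarrow> w \<in> V \<Longrightarrow> v \<noteq> w \<Longrightarrow> (fa_mult (kp_p v) (kp_p w) :: ('p, 'r::comm_ring_1) fa) \<in> kp_relations Lam V r s cmp d"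
  unfolding kp_relations_def apply (rule UnI1, rule UnI1, rule UnI1, rule UnI1, rule UnI1, rule UnI1, rule UnI1, rule UnI1, rule UnI2) by blast

lemma r2a: "l \<in> Lam \<Longrightarrow> m \<in> Lam \<Longrightarrow> d l \<noteq> deg_zero \<Longrightarrow> d m \<noteq> deg_zero \<Longrightarrow> r m = s l \<Longrightarrow> (fa_sub (fa_mult (kp_s d l) (kp_s d m)) (kp_s d (cmp l m)) :: ('p, 'r::comm_ring_1) fa) \<in> kp_relations Lam V r s cmp d"
  unfolding kp_relations_def apply (rule UnI1, rule UnI1, rule UnI1, rule UnI1, rule UnI1, rule UnI1, rule UnI1, rule UnI2) by blast

lemma r2b: "l \<in> Lam \<Longrightarrow> m \<in> Lam \<Longrightarrow> d l \<noteq> deg_zero \<Longrightarrow> d m \<noteq> deg_zero \<Longrightarrow> r m = s l \<Longrightarrow> (fa_sub (fa_mult (kp_sstar d m) (kp_sstar d l)) (kp_sstar d (cmp l m)) :: ('p, 'r::comm_ring_1) fa) \<in> kp_relations Lam V r s cmp d"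
  unfolding kp_relations_def apply (rule UnI1, rule UnI1, rule UnI1, rule UnI1, rule UnI1, rule UnI1, rule UnI2) by blast

lemma r2c: "l \<in> Lam \<Longrightarrow> d l \<noteq> deg_zero \<Longrightarrow> (fa_sub (fa_mult (kp_p (r l)) (kp_s d l)) (kp_s d l) :: ('p, 'r::comm_ring_1) fa) \<in> kp_relations Lam V r s cmp d"
  unfolding kp_relations_def apply (rule UnI1, rule UnI1, rule UnI1, rule UnI1, rule UnI1, rule UnI2) by blast

lemma r2d: "l \<in> Lam \<Longrightarrow> d l \<noteq> deg_zero \<Longrightarrow> (fa_sub (fa_mult (kp_s d l) (kp_p (s l))) (kp_s d l) :: ('p, 'r::comm_ring_1) fa) \<in> kp_relations Lam V r s cmp d"
  unfolding kp_relations_def apply (rule UnI1, rule UnI1, rule UnI1, rule UnI1, rule UnI2) by blast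

lemma r2e: "l \<in> Lam \<Longrightarrow> d l \<noteq> deg_zero \<Longrightarrow> (fa_sub (fa_mult (kp_p (s l)) (kp_sstar d l)) (kp_sstar d l) :: ('p, 'r::comm_ring_1) fa) \<in> kp_relations Lam V r s cmp d"
  unfolding kp_relations_def apply (rule UnI1, rule UnI1, rule UnI1, rule UnI2) by blast

lemma r2f: "l \<in> Lam \<Longrightarrow> d l \<noteq> deg_zero \<Longrightarrow> (fa_sub (fa_mult (kp_sstar d l) (kp_p (r l))) (kp_sstar d l) :: ('p, 'r::comm_ring_1) fa) \<in> kp_relations Lam V r s cmp d"
  unfolding kp_relations_def apply (rule UnI1, rule UnI1, rule UnI2) by blast

lemma r3: "l \<in> Lam \<Longrightarrow> m \<in> Lam \<Longrightarrow> d l \<noteq> deg_zero \<Longrightarrow> d l = d m \<Longrightarrow> (fa_sub (fa_mult (kp_sstar d l) (kp_s d m)) (if l = m then kp_p (s l) else fa_zero) :: ('p, 'r::comm_ring_1) fa) \<in> kp_relations Lam V r s cmp d"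
  unfolding kp_relations_def apply (rule UnI1, rule UnI2) by blast

lemma r4: "v \<in> V \<Longrightarrow> n \<noteq> deg_zero \<Longrightarrow> (fa_sub (kp_p v) (fa_sum {l\<in>Lam. r l = v \<and> d l = n} (\<lambda>l. fa_mult (kp_s d l) (kp_sstar d l))) :: ('p, 'r::comm_ring_1) fa) \<in> kp_relations Lam V r s cmp d"
  unfolding kp_relations_def apply (rule UnI2) by blast

lemma lk_if: "Poly_Mapping.lookup (if c then A else (0 :: 'p kpgen list \<Rightarrow>\<^sub>0 'r::comm_ring_1)) = (if c then Poly_Mapping.lookup A else fa_zero)"
  by (simp add: lk_zero)

lemma kp_inst:
  assumes kg: "is_kgraph Lam V r s cmp d" and rf: "row_finite_no_sources Lam V r d"
  shows "kp J Lam V r s cmp d Pm (Sm d) (Tm d)"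
proof -
  interpret I: idl J by (rule idlJ)
  have rel: "\<And>Z. Poly_Mapping.lookup Z \<in> kp_relations Lam V r s cmp d \<Longrightarrow> Z \<in> J"
    by (simp add: JJ_def kp_ideal_def fa_ideal.gen)
  note lks = lk_diff lk_mult lk_Pm lk_Sm lk_Tm lk_sum lk_if diff_zero
  show ?thesis
    apply unfold_locales
    apply (rule kg)
    apply (rule rf)
    apply (simp add: Sm_def Pm_def)
    apply (simp add: Tm_def Pm_def)
    apply (unfold I.eqJ_def)
    apply (rule rel, unfold lks, erule r1a)
    apply (rule rel, unfold lks, erule (2) r1b)
    apply (rule rel, unfold lks, erule (4) r2a)
    apply (rule rel, unfold lks, erule (4) r2b)
    apply (rule rel, unfold lks, erule (1) r2c)
    apply (rule rel, unfold lks, erule (1) r2d)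
    apply (rule rel, unfold lks, erule (1) r2e)
    apply (rule rel, unfold lks, erule (1) r2f)
    apply (rule rel, unfold lks, erule (3) r3)
    apply (rule rel, unfold lks, erule (1) r4)
    done
qed

end

inductive_set Mr :: "'p set \<Rightarrow> 'p set \<Rightarrow> ('p \<Rightarrow> 'p) \<Rightarrow> ('p \<Rightarrow> 'p) \<Rightarrow> ('p \<Rightarrow> 'p \<Rightarrow> 'p)
   \<Rightarrow> ('p \<Rightarrow> ('k \<Rightarrow> nat)) \<Rightarrow> ('p kpgen list \<Rightarrow>\<^sub>0 'r::comm_ring_1) set"
  for Lam V r s cmp d where
  gen: "cycline_pair Lam V r s cmp d TYPE('r) a b \<Longrightarrow> Sm d a * Tm d b \<in> Mr Lam V r s cmp d"
| zero: "0 \<in> Mr Lam V r s cmp d"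
| add: "x \<in> Mr Lam V r s cmp d \<Longrightarrow> y \<in> Mr Lam V r s cmp d \<Longrightarrow> x + y \<in> Mr Lam V r s cmp d"
| sc: "x \<in> Mr Lam V r s cmp d \<Longrightarrow> Poly_Mapping.single [] c * x \<in> Mr Lam V r s cmp d"
| mult: "x \<in> Mr Lam V r s cmp d \<Longrightarrow> y \<in> Mr Lam V r s cmp d \<Longrightarrow> x * y \<in> Mr Lam V r s cmp d"

lemma lift:
  "x \<in> cycline_sub Lam V r s cmp d \<Longrightarrow>
    \<exists>X. X \<in> (Mr Lam V r s cmp d :: ('p kpgen list \<Rightarrow>\<^sub>0 'r::comm_ring_1) set) \<and> x = Poly_Mapping.lookup X"
proof (induction rule: cycline_sub.induct)
  case (gen a b)
  then show ?case by (intro exI[of _ "Sm d a * Tm d b"]) (simp add: Mr.gen lk_mult lk_Sm lk_Tm)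
next
  case zero
  then show ?case by (intro exI[of _ 0]) (simp add: Mr.zero lk_zero)
next
  case (add x y)
  then obtain X Y where "X \<in> Mr Lam V r s cmp d" "x = Poly_Mapping.lookup X" "Y \<in> Mr Lam V r s cmp d" "y = Poly_Mapping.lookup Y" by blast
  then show ?case by (intro exI[of _ "X + Y"]) (simp add: Mr.add lk_add)
next
  case (smult x c)
  then obtain X where "X \<in> Mr Lam V r s cmp d" "x = Poly_Mapping.lookup X" by blast
  then show ?case
    by (intro exI[of _ "Poly_Mapping.single [] c * X"]) (simp add: Mr.sc fun_eq_iff lk_scl fa_smult_def)
next
  case (mult x y)
  then obtain X Y where "X \<in> Mr Lam V r s cmp d" "x = Poly_Mapping.lookup X" "Y \<in> Mr Lam V r s cmp d" "y = Poly_Mapping.lookup Y" by blast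
  then show ?case by (intro exI[of _ "X * Y"]) (simp add: Mr.mult lk_mult)
qed

theorem lemma4p4:
  fixes Lam V :: "'p set" and r s :: "'p \<Rightarrow> 'p" and cmp :: "'p \<Rightarrow> 'p \<Rightarrow> 'p"
    and d :: "'p \<Rightarrow> ('k::finite \<Rightarrow> nat)"
  assumes "is_kgraph Lam V r s cmp d"
    and "row_finite_no_sources Lam V r d"
  shows "\<forall>x \<in> (cycline_sub Lam V r s cmp d :: ('p, 'r::comm_ring_1) fa set).
           \<forall>y \<in> cycline_sub Lam V r s cmp d.
             kp_eq Lam V r s cmp d (fa_mult x y) (fa_mult y x)"
proof -
  interpret K: kp "JJ Lam V r s cmp d :: ('p kpgen list \<Rightarrow>\<^sub>0 'r) set" Lam V r s cmp d Pm "Sm d" "Tm d"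
    by (rule kp_inst[OF assms])
  let ?M = "Mr Lam V r s cmp d :: ('p kpgen list \<Rightarrow>\<^sub>0 'r) set"
  have cyc: "K.cyc a b" if "cycline_pair Lam V r s cmp d TYPE('r) a b" for a b
    using that unfolding cycline_pair_def K.cyc_def K.PP_def K.eqJ_def
    by (simp add: kp_eq_def JJ_def lk_diff lk_mult lk_Sm lk_Tm)
  have ext: "K.eqJ (X * Y) (Y * X)"
    if gens: "\<And>a b. cycline_pair Lam V r s cmp d TYPE('r) a b \<Longrightarrow> K.eqJ (X * (Sm d a * Tm d b)) ((Sm d a * Tm d b) * X)"
      and Y: "Y \<in> ?M" for X Y
    using Y
  proof (induction rule: Mr.induct)
    case (gen a b) then show ?case by (rule gens)
  next
    case zero then show ?case by simp
  next
    case (add y1 y2)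
    have "X * (y1 + y2) = X * y1 + X * y2" by (simp add: distrib_left)
    also have "K.eqJ \<dots> (y1 * X + y2 * X)" using add.IH by (rule K.eq_add)
    also have "\<dots> = (y1 + y2) * X" by (simp add: distrib_right)
    finally show ?case .
  next
    case (sc y c)
    have "X * (Poly_Mapping.single [] c * y) = (X * Poly_Mapping.single [] c) * y" by (simp add: mult.assoc)
    also have "X * Poly_Mapping.single [] c = Poly_Mapping.single [] c * X" by (rule central[symmetric])
    also have "Poly_Mapping.single [] c * X * y = Poly_Mapping.single [] c * (X * y)" by (simp add: mult.assoc)
    also have "K.eqJ \<dots> (Poly_Mapping.single [] c * (y * X))" using sc.IH by (rule K.eq_ml)
    also have "\<dots> = (Poly_Mapping.single [] c * y) * X" by (simp add: mult.assoc)
    finally show ?case .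
  next
    case (mult y1 y2)
    have "X * (y1 * y2) = (X * y1) * y2" by (simp add: mult.assoc)
    also have "K.eqJ \<dots> ((y1 * X) * y2)" using mult.IH(1) by (rule K.eq_mr)
    also have "\<dots> = y1 * (X * y2)" by (simp add: mult.assoc)
    also have "K.eqJ \<dots> (y1 * (y2 * X))" using mult.IH(2) by (rule K.eq_ml)
    also have "\<dots> = (y1 * y2) * X" by (simp add: mult.assoc)
    finally show ?case .
  qed
  have gencomm: "K.eqJ ((Sm d a * Tm d b) * Y) (Y * (Sm d a * Tm d b))"
    if "cycline_pair Lam V r s cmp d TYPE('r) a b" "Y \<in> ?M" for a b Y
    using that(2)
  proof (rule ext[rotated])
    fix a' b' assume "cycline_pair Lam V r s cmp d TYPE('r) a' b'"
    then show "K.eqJ (Sm d a * Tm d b * (Sm d a' * Tm d b')) (Sm d a' * Tm d b' * (Sm d a * Tm d b))"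
      using K.MG[OF cyc[OF that(1)] cyc] by blast
  qed
  have comm: "K.eqJ (X * Y) (Y * X)" if "X \<in> ?M" "Y \<in> ?M" for X Y
    using that(2)
  proof (rule ext[rotated])
    fix a b assume "cycline_pair Lam V r s cmp d TYPE('r) a b"
    then show "K.eqJ (X * (Sm d a * Tm d b)) (Sm d a * Tm d b * X)"
      using K.eq_sym[OF gencomm[OF _ that(1)]] by blast
  qed
  show ?thesis
  proof (intro ballI)
    fix x y assume x: "x \<in> (cycline_sub Lam V r s cmp d :: ('p, 'r) fa set)" and y: "y \<in> (cycline_sub Lam V r s cmp d :: ('p, 'r) fa set)"
    obtain X where X: "X \<in> ?M" "x = Poly_Mapping.lookup X" using lift[OF x] by blast
    obtain Y where Y: "Y \<in> ?M" "y = Poly_Mapping.lookup Y" using lift[OF y] by blast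
    have "K.eqJ (X * Y) (Y * X)" by (rule comm[OF X(1) Y(1)])
    then have "X * Y - Y * X \<in> (JJ Lam V r s cmp d :: ('p kpgen list \<Rightarrow>\<^sub>0 'r) set)"
      unfolding K.eqJ_def .
    then show "kp_eq Lam V r s cmp d (fa_mult x y) (fa_mult y x)"
      unfolding X(2) Y(2) kp_eq_def JJ_def by (simp add: lk_diff lk_mult)
  qed
qed



end
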